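(* Let $T$ be a decomposition tree of a distance-hereditary graph $G$. Then for every internal node $v$ of $T$ and every integer $0\le k\le|\hat{TS}(v)|$, $$\hat\gamma_k(v)=\begin{cases}\hat{min}(v)+\hat\alpha(v)-k & \text{if } 0\le k\le\hat\alpha(v),\\ \hat{min}(v)+k-\hat\beta(v) & \text{if } \hat\beta(v)\le k\le|\hat{TS}(v)|,\\ \hat{min}(v) & \text{if } \hat\alpha(v)<k<\hat\beta(v)\text{ and } k-\hat\alpha(v)\text{ is even},\\ \hat{min}(v)+1 & \text{otherwise.}\end{cases}$$
   Context: All graphs are finite, simple, undirected. For a graph $H$ and $S\subseteq V(H)$, $N_H[S]$ is $S$ together with all vertices adjacent to a vertex of $S$, and $H[S]$ is the induced subgraph. Graphs carry a "twin set": a single-vertex graph on $x$ has twin set $\{x\}$. For vertex-disjoint graphs $G_l,G_r$ with twin sets $TS(G_l),TS(G_r)$: the true twin operation $G_l\otimes G_r$ has vertex set $V(G_l)\cup V(G_r)$, edge set $E(G_l)\cup E(G_r)\cup\{uw: u\in TS(G_l), w\in TS(G_r)\}$ and twin set $TS(G_l)\cup TS(G_r)$; the false twin operation $G_l\odot G_r$ has vertex set $V(G_l)\cup V(G_r)$, edge set $E(G_l)\cup E(G_r)$, twin set $TS(G_l)\cup TS(G_r)$; the attachment operation $G_l\oplus G_r$ has the same vertex and edge sets as $G_l\otimes G_r$ and twin set $TS(G_l)$. A decomposition tree $T$ of $G$ is a rooted binary tree whose leaves are in bijection with $V(G)$, each internal node having a left and a right child and a label in $\{\otimes,\odot,\oplus\}$;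 for each node $v$ define $\hat G(v)$ and $\hat{TS}(v)$ recursively: for a leaf $x$, the single-vertex graph on $x$ with twin set $\{x\}$; for an internal node $v$ with label $\circ$ and children $v_l,v_r$, $\hat G(v)=\hat G(v_l)\circ\hat G(v_r)$ with the corresponding twin set; one requires $\hat G(\text{root})=G$. Then $\hat G(v)$ is the subgraph of $G$ induced by the set $\hat V(v)$ of leaves below $v$. For a node $v$ and $0\le k\le|\hat{TS}(v)|$, call $S\subseteq\hat V(v)$ $k$-feasible if $\hat V(v)\setminus\hat{TS}(v)\subseteq N_{\hat G(v)}[S]$ and there is $X\subseteq S\cap\hat{TS}(v)$ with $|X|=k$ such that $\hat G(v)[S\setminus X]$ has a perfect matching. $\hat\gamma_k(v)$ is the minimum size of a $k$-feasible set. $\hat{min}(v)=\min\{\hat\gamma_k(v):0\le k\le|\hat{TS}(v)|\}$, and $\hat\alpha(v)$, $\hat\beta(v)$ are the smallest and the largest $k$ with $\hat\gamma_k(v)=\hat{min}(v)$. *)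

theory Defs
  imports Main "HOL-Library.Extended_Nat"
begin

definition simple_graph :: "'a set \<Rightarrow> 'a set set \<Rightarrow> bool" where
  "simple_graph V E \<longleftrightarrow> finite V \<and> (\<forall>e\<in>E. e \<subseteq> V \<and> card e = 2)"

definition walk_in :: "'a set \<Rightarrow> 'a set set \<Rightarrow> 'a list \<Rightarrow> bool" where
  "walk_in W E xs \<longleftrightarrow> xs \<noteq> [] \<and> set xs \<subseteq> W \<and>
     (\<forall>i. i + 1 < length xs \<longrightarrow> {xs ! i, xs ! (i + 1)} \<in> E)"

definition connected_on :: "'a set \<Rightarrow> 'a set set \<Rightarrow> bool" where
  "connected_on W E \<longleftrightarrow>
     (\<forall>u\<in>W. \<forall>v\<in>W. \<exists>xs. walk_in W E xs \<and> hd xs = u \<and> last xs = v)"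

definition dist_in :: "'a set \<Rightarrow> 'a set set \<Rightarrow> 'a \<Rightarrow> 'a \<Rightarrow> nat" where
  "dist_in W E u v =
     (LEAST n. \<exists>xs. walk_in W E xs \<and> hd xs = u \<and> last xs = v \<and> length xs = n + 1)"

definition distance_hereditary :: "'a set \<Rightarrow> 'a set set \<Rightarrow> bool" where
  "distance_hereditary V E \<longleftrightarrow> simple_graph V E \<and>
     (\<forall>W\<subseteq>V. connected_on W E \<longrightarrow>
        (\<forall>u\<in>W. \<forall>v\<in>W. dist_in W E u v = dist_in V E u v))"

datatype op_label = TrueTwin | FalseTwin | Attach

datatype 'a dtree = Leaf 'a | Node op_label "'a dtree" "'a dtree"

fun leaves :: "'a dtree \<Rightarrow> 'a set" where
  "leaves (Leaf x) = {x}"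
| "leaves (Node c l r) = leaves l \<union> leaves r"

fun tts :: "'a dtree \<Rightarrow> 'a set" where
  "tts (Leaf x) = {x}"
| "tts (Node TrueTwin l r) = tts l \<union> tts r"
| "tts (Node FalseTwin l r) = tts l \<union> tts r"
| "tts (Node Attach l r) = tts l"

fun tedges :: "'a dtree \<Rightarrow> 'a set set" where
  "tedges (Leaf x) = {}"
| "tedges (Node TrueTwin l r) =
     tedges l \<union> tedges r \<union> {{u, w} | u w. u \<in> tts l \<and> w \<in> tts r}"
| "tedges (Node FalseTwin l r) = tedges l \<union> tedges r"
| "tedges (Node Attach l r) =
     tedges l \<union> tedges r \<union> {{u, w} | u w. u \<in> tts l \<and> w \<in> tts r}"

fun distinct_leaves :: "'a dtree \<Rightarrow> bool" where
  "distinct_leaves (Leaf x) = True"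
| "distinct_leaves (Node c l r) \<longleftrightarrow>
     distinct_leaves l \<and> distinct_leaves r \<and> leaves l \<inter> leaves r = {}"

fun subtrees :: "'a dtree \<Rightarrow> 'a dtree set" where
  "subtrees (Leaf x) = {Leaf x}"
| "subtrees (Node c l r) = insert (Node c l r) (subtrees l \<union> subtrees r)"

fun is_internal :: "'a dtree \<Rightarrow> bool" where
  "is_internal (Leaf x) = False"
| "is_internal (Node c l r) = True"

definition decomposition_tree :: "'a dtree \<Rightarrow> 'a set \<Rightarrow> 'a set set \<Rightarrow> bool" where
  "decomposition_tree T V E \<longleftrightarrow> distinct_leaves T \<and> leaves T = V \<and> tedges T = E"

definition closed_nbhd :: "'a set set \<Rightarrow> 'a set \<Rightarrow> 'a set" where
  "closed_nbhd E S = S \<union> {u. \<exists>w\<in>S. {u, w} \<in> E}"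

definition has_perfect_matching :: "'a set set \<Rightarrow> 'a set \<Rightarrow> bool" where
  "has_perfect_matching E W \<longleftrightarrow>
     (\<exists>M. M \<subseteq> E \<and> (\<forall>e\<in>M. e \<subseteq> W) \<and>
          (\<forall>e\<in>M. \<forall>e'\<in>M. e \<noteq> e' \<longrightarrow> e \<inter> e' = {}) \<and> \<Union>M = W)"

definition k_feasible :: "'a dtree \<Rightarrow> nat \<Rightarrow> 'a set \<Rightarrow> bool" where
  "k_feasible v k S \<longleftrightarrow> S \<subseteq> leaves v \<and>
     leaves v - tts v \<subseteq> closed_nbhd (tedges v) S \<and>
     (\<exists>X. X \<subseteq> S \<inter> tts v \<and> card X = k \<and> has_perfect_matching (tedges v) (S - X))"

text \<open>minimum size of a k-feasible set (infinity if none exists)\<close>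
definition gamma_hat :: "'a dtree \<Rightarrow> nat \<Rightarrow> enat" where
  "gamma_hat v k = (INF S\<in>{S. k_feasible v k S}. enat (card S))"

definition min_hat :: "'a dtree \<Rightarrow> enat" where
  "min_hat v = Min (gamma_hat v ` {0..card (tts v)})"

definition alpha_hat :: "'a dtree \<Rightarrow> nat" where
  "alpha_hat v = (LEAST k. k \<le> card (tts v) \<and> gamma_hat v k = min_hat v)"

definition beta_hat :: "'a dtree \<Rightarrow> nat" where
  "beta_hat v = (GREATEST k. k \<le> card (tts v) \<and> gamma_hat v k = min_hat v)"

end

theory Submission
  imports Defs
begin

definition D :: "nat \<Rightarrow> nat \<Rightarrow> nat \<Rightarrow> nat" where
 "D a b k = (if k \<le> a then a - k else if b \<le> k then k - b else if even (k - a) then 0 else 1)"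
definition ndist :: "nat \<Rightarrow> nat \<Rightarrow> nat" where "ndist x y = (x - y) + (y - x)"

lemma D_le1: "\<not> k \<le> a \<Longrightarrow> \<not> b \<le> k \<Longrightarrow> D a b k \<le> 1"
  by (simp add: D_def)

lemma Dlow: assumes "a \<le> p" "p \<le> b" "even (p - a)" shows "D a b k \<le> ndist k p"
proof -
  consider "k \<le> a" | "b \<le> k" | "k = p" | "\<not> k \<le> a" "\<not> b \<le> k" "k \<noteq> p" by blast
  then show ?thesis
  proof cases
    case 1 then show ?thesis using assms unfolding D_def ndist_def by simp
  next
    case 2 then show ?thesis using assms unfolding D_def ndist_def by auto
  next
    case 3 then show ?thesis using assms by (simp add: D_def ndist_def)
  next
    case 4 then show ?thesis using D_le1[of k a b] by (simp add: ndist_def)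
  qed
qed

lemma Dup: assumes "a \<le> b" "even (b - a)" shows "\<exists>p. a \<le> p \<and> p \<le> b \<and> even (p - a) \<and> D a b k = ndist k p"
proof (cases "k \<le> a")
  case True then show ?thesis using assms by (intro exI[of _ a]) (auto simp: D_def ndist_def)
next
  case F: False
  show ?thesis
  proof (cases "b \<le> k")
    case True then show ?thesis using assms F by (intro exI[of _ b]) (auto simp: D_def ndist_def)
  next
    case False
    show ?thesis
    proof (cases "even (k - a)")
      case True then show ?thesis using F False by (intro exI[of _ k]) (auto simp: D_def ndist_def)
    next
      case odd: False
      then have "even (k - 1 - a)" "k - 1 \<ge> a" using F 
        by (auto simp: Suc_diff_le[symmetric])
      then show ?thesis using F False odd by (intro exI[of _ "k - 1"]) (auto simp: D_def ndist_def)
    qed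
  qed
qed
definition PP :: "nat \<Rightarrow> nat \<Rightarrow> nat \<Rightarrow> bool" where
  "PP a b p \<longleftrightarrow> a \<le> p \<and> p \<le> b \<and> even (p - a)"

lemma Dlow': "PP a b p \<Longrightarrow> D a b k \<le> ndist k p"
  using Dlow PP_def by blast

lemma Dup': "a \<le> b \<Longrightarrow> even (b - a) \<Longrightarrow> \<exists>p. PP a b p \<and> D a b k = ndist k p"
  using Dup PP_def by blast

lemma PP_add: "PP a1 b1 p1 \<Longrightarrow> PP a2 b2 p2 \<Longrightarrow> PP (a1+a2) (b1+b2) (p1+p2)"
  unfolding PP_def by auto

lemma ft_low:
  assumes "a1 \<le> b1" "even (b1 - a1)" "a2 \<le> b2" "even (b2 - a2)"
  shows "D (a1+a2) (b1+b2) (k1+k2) \<le> D a1 b1 k1 + D a2 b2 k2"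
proof -
  obtain p1 where p1: "PP a1 b1 p1" "D a1 b1 k1 = ndist k1 p1" using Dup' assms by blast
  obtain p2 where p2: "PP a2 b2 p2" "D a2 b2 k2 = ndist k2 p2" using Dup' assms by blast
  have "D (a1+a2) (b1+b2) (k1+k2) \<le> ndist (k1+k2) (p1+p2)" using Dlow' PP_add p1 p2 by blast
  also have "\<dots> \<le> ndist k1 p1 + ndist k2 p2" unfolding ndist_def by arith
  finally show ?thesis using p1 p2 by simp
qed

lemma PP_split: assumes "PP (a1+a2) (b1+b2) p" "a1 \<le> b1" "even (b1 - a1)" "a2 \<le> b2" "even (b2 - a2)"
  shows "\<exists>p1 p2. PP a1 b1 p1 \<and> PP a2 b2 p2 \<and> p = p1 + p2"
proof (cases "p - a2 \<le> b1")
  case True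
  then show ?thesis using assms unfolding PP_def
    by (intro exI[of _ "p - a2"] exI[of _ a2]) auto
next
  case False
  then show ?thesis using assms unfolding PP_def
    by (intro exI[of _ b1] exI[of _ "p - b1"]) auto
qed

lemma ft_up:
  assumes "a1 \<le> b1" "even (b1 - a1)" "a2 \<le> b2" "even (b2 - a2)" "b1 \<le> n1" "b2 \<le> n2" "k \<le> n1 + n2"
  shows "\<exists>k1 k2. k1 \<le> n1 \<and> k2 \<le> n2 \<and> k = k1 + k2 \<and> D a1 b1 k1 + D a2 b2 k2 = D (a1+a2) (b1+b2) k"
proof -
  have "a1 + a2 \<le> b1 + b2" "even (b1 + b2 - (a1 + a2))" using assms by auto
  then obtain p where p: "PP (a1+a2) (b1+b2) p" "D (a1+a2) (b1+b2) k = ndist k p" using Dup' by blast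
  obtain p1 p2 where pp: "PP a1 b1 p1" "PP a2 b2 p2" "p = p1 + p2" using PP_split[OF p(1)] assms by blast
  define k1 where "k1 = (if k \<le> p then min k p1 else p1 + min (k - p) (n1 - p1))"
  define k2 where "k2 = k - k1"
  have b: "p1 \<le> n1" "p2 \<le> n2" using pp assms unfolding PP_def by auto
  have k: "k1 \<le> n1" "k2 \<le> n2" "k = k1 + k2" "ndist k1 p1 + ndist k2 p2 = ndist k p"
    using b assms pp(3) unfolding k1_def k2_def ndist_def by auto
  have "D a1 b1 k1 + D a2 b2 k2 \<le> D (a1+a2) (b1+b2) k"
    using Dlow'[OF pp(1), of k1] Dlow'[OF pp(2), of k2] k p by linarith
  moreover have "D (a1+a2) (b1+b2) k \<le> D a1 b1 k1 + D a2 b2 k2" using ft_low assms k(3) by blast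
  ultimately show ?thesis using k by (intro exI[of _ k1] exI[of _ k2]) auto
qed


definition pbit :: "nat \<Rightarrow> nat" where "pbit x = (if even x then 0 else 1)"

definition aT :: "nat \<Rightarrow> nat \<Rightarrow> nat \<Rightarrow> nat \<Rightarrow> nat" where
  "aT a1 b1 a2 b2 = max (max (a1 - b2) (a2 - b1)) (pbit (a1 + a2))"

lemma pbit_simps: "pbit x \<le> 1" "pbit x = 0 \<longleftrightarrow> even x" "pbit x = 1 \<longleftrightarrow> odd x"
  by (auto simp: pbit_def)

lemma aT_ge: "a1 - b2 \<le> aT a1 b1 a2 b2" "a2 - b1 \<le> aT a1 b1 a2 b2" "pbit (a1 + a2) \<le> aT a1 b1 a2 b2"
  by (auto simp: aT_def)

lemma aT_cases: "aT a1 b1 a2 b2 = a1 - b2 \<or> aT a1 b1 a2 b2 = a2 - b1 \<or> aT a1 b1 a2 b2 = pbit (a1 + a2)"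
  by (auto simp: aT_def max_def)

lemma aT_par:
  assumes "a1 \<le> b1" "even (b1 - a1)" "a2 \<le> b2" "even (b2 - a2)"
  shows "even (aT a1 b1 a2 b2) \<longleftrightarrow> even (a1 + a2)"
proof -
  have g: "a1 - b2 \<le> aT a1 b1 a2 b2" "a2 - b1 \<le> aT a1 b1 a2 b2" "pbit (a1 + a2) \<le> aT a1 b1 a2 b2"
    by (rule aT_ge)+
  from aT_cases[of a1 b1 a2 b2] show ?thesis
  proof (elim disjE)
    assume h: "aT a1 b1 a2 b2 = a1 - b2"
    show ?thesis
    proof (cases "b2 \<le> a1")
      case True then show ?thesis using h assms by auto
    next
      case False then have "pbit (a1 + a2) = 0" using h g by auto
      then show ?thesis using h False by (auto simp: pbit_simps)
    qed
  next
    assume h: "aT a1 b1 a2 b2 = a2 - b1"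
    show ?thesis
    proof (cases "b1 \<le> a2")
      case True then show ?thesis using h assms by auto
    next
      case False then have "pbit (a1 + a2) = 0" using h g by auto
      then show ?thesis using h False by (auto simp: pbit_simps)
    qed
  next
    assume h: "aT a1 b1 a2 b2 = pbit (a1 + a2)"
    then show ?thesis by (auto simp: pbit_def)
  qed
qed

lemma aT_le:
  assumes "a1 \<le> b1" "even (b1 - a1)" "a2 \<le> b2" "even (b2 - a2)"
  shows "aT a1 b1 a2 b2 \<le> b1 + b2" "even (b1 + b2 - aT a1 b1 a2 b2)"
proof -
  have "pbit (a1 + a2) \<le> b1 + b2"
  proof (cases "even (a1 + a2)")
    case True then show ?thesis by (simp add: pbit_def)
  next
    case False then have "odd (b1 + b2)" using assms by auto
    then have "b1 + b2 \<noteq> 0" by auto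
    then show ?thesis using pbit_simps(1)[of "a1+a2"] by linarith
  qed
  then show "aT a1 b1 a2 b2 \<le> b1 + b2" using aT_cases[of a1 b1 a2 b2] assms by auto
  then show "even (b1 + b2 - aT a1 b1 a2 b2)" using aT_par[OF assms] assms by auto
qed

lemma tt_PP:
  assumes "PP a1 b1 p1" "PP a2 b2 p2" "j \<le> p1" "j \<le> p2" "even (b1 - a1)" "even (b2 - a2)"
  shows "PP (aT a1 b1 a2 b2) (b1 + b2) (p1 + p2 - 2 * j)"
proof -
  have ab: "a1 \<le> b1" "even (b1 - a1)" "a2 \<le> b2" "even (b2 - a2)"
    using assms unfolding PP_def by auto
  have par: "even (p1 + p2 - 2 * j) \<longleftrightarrow> even (a1 + a2)" using assms unfolding PP_def by auto
  have ge: "a1 - b2 \<le> p1 + p2 - 2 * j" "a2 - b1 \<le> p1 + p2 - 2 * j"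
    using assms unfolding PP_def by auto
  have gb: "pbit (a1 + a2) \<le> p1 + p2 - 2 * j"
  proof (cases "even (a1 + a2)")
    case True then show ?thesis by (simp add: pbit_def)
  next
    case False then have "odd (p1 + p2 - 2 * j)" using par by simp
    then have "p1 + p2 - 2 * j \<noteq> 0" by (metis dvd_0_right)
    then show ?thesis using pbit_simps(1)[of "a1+a2"] by linarith
  qed
  have "aT a1 b1 a2 b2 \<le> p1 + p2 - 2 * j" using aT_cases[of a1 b1 a2 b2] ge gb by auto
  moreover have "p1 + p2 - 2 * j \<le> b1 + b2" using assms unfolding PP_def by auto
  moreover have "even (p1 + p2 - 2 * j - aT a1 b1 a2 b2)"
    using calculation par aT_par[OF ab] by auto
  ultimately show ?thesis unfolding PP_def by blast
qed

lemma tt_low: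
  assumes "a1 \<le> b1" "even (b1 - a1)" "a2 \<le> b2" "even (b2 - a2)"
  shows "D (aT a1 b1 a2 b2) (b1 + b2) (x1 + x2) \<le> D a1 b1 (x1 + j) + D a2 b2 (x2 + j)"
proof -
  obtain p1 where p1: "PP a1 b1 p1" "D a1 b1 (x1 + j) = ndist (x1 + j) p1" using Dup' assms by blast
  obtain p2 where p2: "PP a2 b2 p2" "D a2 b2 (x2 + j) = ndist (x2 + j) p2" using Dup' assms by blast
  define j' where "j' = min j (min p1 p2)"
  have "D (aT a1 b1 a2 b2) (b1 + b2) (x1 + x2) \<le> ndist (x1 + x2) (p1 + p2 - 2 * j')"
    using Dlow' tt_PP[OF p1(1) p2(1)] j'_def assms by simp
  also have "\<dots> \<le> ndist (x1 + j) p1 + ndist (x2 + j) p2" unfolding ndist_def j'_def min_def by auto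
  finally show ?thesis using p1 p2 by simp
qed

lemma tt_dec:
  assumes "PP (aT a1 b1 a2 b2) (b1 + b2) p" "a1 \<le> b1" "even (b1 - a1)" "a2 \<le> b2" "even (b2 - a2)"
  shows "\<exists>p1 p2 j. PP a1 b1 p1 \<and> PP a2 b2 p2 \<and> j \<le> p1 \<and> j \<le> p2 \<and> p1 + p2 = p + 2 * j"
proof -
  have par: "even (aT a1 b1 a2 b2) \<longleftrightarrow> even (a1 + a2)" using aT_par assms(2-) by blast
  have g: "a1 - b2 \<le> aT a1 b1 a2 b2" "a2 - b1 \<le> aT a1 b1 a2 b2" by (rule aT_ge)+
  consider "b1 - b2 \<le> p" "b2 - b1 \<le> p" | "p < b1 - b2" | "p < b2 - b1" by linarith
  then show ?thesis
  proof cases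
    case 1
    have "even (b1 + b2 - p)" using assms par unfolding PP_def by auto
    then obtain q where q: "b1 + b2 - p = 2 * q" by blast
    have "PP a1 b1 b1" "PP a2 b2 b2" using assms unfolding PP_def by auto
    moreover have "q \<le> b1" "q \<le> b2" "b1 + b2 = p + 2 * q" using 1 q assms(1) unfolding PP_def by auto
    ultimately show ?thesis by blast
  next
    case 2
    have pp: "even p \<longleftrightarrow> even (a1 + a2)" "aT a1 b1 a2 b2 \<le> p" using assms(1) par unfolding PP_def by auto
    have eb: "even b1 \<longleftrightarrow> even a1" "even b2 \<longleftrightarrow> even a2" using assms by auto
    have "PP a1 b1 (p + b2)" unfolding PP_def using 2 pp g eb by auto
    moreover have "PP a2 b2 b2" using assms unfolding PP_def by auto
    ultimately show ?thesis by (intro exI[of _ "p + b2"] exI[of _ b2] exI[of _ b2]) auto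
  next
    case 3
    have pp: "even p \<longleftrightarrow> even (a1 + a2)" "aT a1 b1 a2 b2 \<le> p" using assms(1) par unfolding PP_def by auto
    have eb: "even b1 \<longleftrightarrow> even a1" "even b2 \<longleftrightarrow> even a2" using assms by auto
    have "PP a2 b2 (p + b1)" unfolding PP_def using 3 pp g eb by auto
    moreover have "PP a1 b1 b1" using assms unfolding PP_def by auto
    ultimately show ?thesis by (intro exI[of _ b1] exI[of _ "p + b1"] exI[of _ b1]) auto
  qed
qed

lemma D_mid_le1: "D a b k \<le> 1 \<or> k \<le> a \<or> b \<le> k" by (simp add: D_def)

lemma Dup_ge:
  assumes "a \<le> b" "even (b - a)" "k < b"
  shows "\<exists>p. PP a b p \<and> k \<le> p \<and> D a b k = ndist k p"
proof -
  obtain p where p: "PP a b p" "D a b k = ndist k p" using Dup' assms by blast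
  show ?thesis
  proof (cases "k \<le> p")
    case True then show ?thesis using p by blast
  next
    case False
    have ka: "\<not> k \<le> a" using False p unfolding PP_def D_def ndist_def by auto
    then have "D a b k \<le> 1" using D_mid_le1[of a b k] assms by auto
    then have k: "k = p + 1" using p False unfolding ndist_def by auto
    have "p + 2 \<le> b" using k assms p(1) unfolding PP_def by auto
    then have "PP a b (p + 2)" using p(1) unfolding PP_def by auto
    moreover have "D a b k = ndist k (p + 2)" using p k unfolding ndist_def by auto
    ultimately show ?thesis using k by (intro exI[of _ "p + 2"]) auto
  qed
qed

lemma tt_up:
  assumes "a1 \<le> b1" "even (b1 - a1)" "a2 \<le> b2" "even (b2 - a2)" "b1 \<le> n1" "b2 \<le> n2" "k \<le> n1 + n2"
  shows "\<exists>x1 x2 j. x1 + j \<le> n1 \<and> x2 + j \<le> n2 \<and> k = x1 + x2 \<and>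
            D a1 b1 (x1 + j) + D a2 b2 (x2 + j) = D (aT a1 b1 a2 b2) (b1 + b2) k"
proof -
  let ?a = "aT a1 b1 a2 b2"
  have ab: "?a \<le> b1 + b2" "even (b1 + b2 - ?a)" using aT_le assms by auto
  have "\<exists>x1 x2 j. x1 + j \<le> n1 \<and> x2 + j \<le> n2 \<and> k = x1 + x2 \<and>
            D a1 b1 (x1 + j) + D a2 b2 (x2 + j) \<le> D ?a (b1 + b2) k"
  proof (cases "b1 + b2 \<le> k")
    case True
    obtain k1 k2 where k: "k1 \<le> n1" "k2 \<le> n2" "k = k1 + k2"
      "D a1 b1 k1 + D a2 b2 k2 = D (a1+a2) (b1+b2) k" using ft_up assms by blast
    have "D (a1+a2) (b1+b2) k = D ?a (b1 + b2) k" using True ab assms unfolding D_def by auto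
    then show ?thesis using k by (intro exI[of _ k1] exI[of _ k2] exI[of _ 0]) auto
  next
    case False
    obtain p where p: "PP ?a (b1 + b2) p" "k \<le> p" "D ?a (b1 + b2) k = ndist k p"
      using Dup_ge[OF ab, of k] False by auto
    obtain p1 p2 j where d: "PP a1 b1 p1" "PP a2 b2 p2" "j \<le> p1" "j \<le> p2" "p1 + p2 = p + 2 * j"
      using tt_dec[OF p(1)] assms by blast
    define s1 where "s1 = min (p - k) (p1 - j)"
    define s2 where "s2 = p - k - s1"
    have bb: "p1 \<le> n1" "p2 \<le> n2" using d assms unfolding PP_def by auto
    define x1 where "x1 = p1 - j - s1"
    define x2 where "x2 = p2 - j - s2"
    have c: "x1 + j \<le> n1" "x2 + j \<le> n2" "k = x1 + x2"
      "ndist (x1 + j) p1 + ndist (x2 + j) p2 = ndist k p"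
      using d p bb unfolding s1_def s2_def x1_def x2_def ndist_def by auto
    have "D a1 b1 (x1 + j) + D a2 b2 (x2 + j) \<le> D ?a (b1 + b2) k"
      using c(4) Dlow'[OF d(1), of "x1 + j"] Dlow'[OF d(2), of "x2 + j"] p(3) by linarith
    then show ?thesis using c(1-3) by blast
  qed
  then obtain x1 x2 j where x: "x1 + j \<le> n1" "x2 + j \<le> n2" "k = x1 + x2"
    "D a1 b1 (x1 + j) + D a2 b2 (x2 + j) \<le> D ?a (b1 + b2) k" by blast
  moreover have "D ?a (b1 + b2) k \<le> D a1 b1 (x1 + j) + D a2 b2 (x2 + j)"
    using tt_low assms x(3) by blast
  ultimately show ?thesis by (intro exI[of _ x1] exI[of _ x2] exI[of _ j]) auto
qed


definition MA :: "nat \<Rightarrow> nat \<Rightarrow> nat \<Rightarrow> nat \<Rightarrow> nat" where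
  "MA a1 b1 a2 b2 = (if a2 \<le> b1 then 0 else a2 - b1)"
definition aA :: "nat \<Rightarrow> nat \<Rightarrow> nat \<Rightarrow> nat \<Rightarrow> nat" where
  "aA a1 b1 a2 b2 = (if a2 \<le> b1 then aT a1 b1 a2 b2 else 0)"
definition bA :: "nat \<Rightarrow> nat \<Rightarrow> nat \<Rightarrow> nat \<Rightarrow> nat" where
  "bA a1 b1 a2 b2 = (if a2 \<le> b1 then b1 - a2 else 0)"

lemma D00: "D 0 0 k = k" by (simp add: D_def)

lemma pbit_le_odd: "odd x \<Longrightarrow> odd y \<Longrightarrow> pbit x \<le> y"
  by (cases y) (auto simp: pbit_def)

lemma aA_props:
  assumes "a1 \<le> b1" "even (b1 - a1)" "a2 \<le> b2" "even (b2 - a2)"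
  shows "aA a1 b1 a2 b2 \<le> bA a1 b1 a2 b2" "even (bA a1 b1 a2 b2 - aA a1 b1 a2 b2)" "bA a1 b1 a2 b2 \<le> b1"
proof -
  show "bA a1 b1 a2 b2 \<le> b1" by (simp add: bA_def)
  show "aA a1 b1 a2 b2 \<le> bA a1 b1 a2 b2"
  proof (cases "a2 \<le> b1")
    case True
    have "pbit (a1 + a2) \<le> b1 - a2"
    proof (cases "even (a1 + a2)")
      case True then show ?thesis by (simp add: pbit_def)
    next
      case False then have "odd (b1 - a2)" using assms \<open>a2 \<le> b1\<close> by auto
      then show ?thesis using False pbit_le_odd by blast
    qed
    then show ?thesis using True aT_cases[of a1 b1 a2 b2] assms unfolding aA_def bA_def by auto
  next
    case False then show ?thesis by (simp add: aA_def bA_def)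
  qed
  then show "even (bA a1 b1 a2 b2 - aA a1 b1 a2 b2)"
    using aT_par[OF assms] assms unfolding aA_def bA_def by (auto split: if_splits)
qed

lemma at_low:
  assumes "a1 \<le> b1" "even (b1 - a1)" "a2 \<le> b2" "even (b2 - a2)"
  shows "MA a1 b1 a2 b2 + D (aA a1 b1 a2 b2) (bA a1 b1 a2 b2) k \<le> D a1 b1 (k + j) + D a2 b2 j"
proof -
  obtain p1 where p1: "PP a1 b1 p1" "D a1 b1 (k + j) = ndist (k + j) p1" using Dup' assms by blast
  obtain p2 where p2: "PP a2 b2 p2" "D a2 b2 j = ndist j p2" using Dup' assms by blast
  show ?thesis
  proof (cases "a2 \<le> b1")
    case False
    then have "D (aA a1 b1 a2 b2) (bA a1 b1 a2 b2) k = k" "MA a1 b1 a2 b2 = a2 - b1"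
      by (simp_all add: MA_def aA_def bA_def D00)
    moreover have "a2 - b1 + k \<le> ndist (k + j) p1 + ndist j p2"
      using False p1(1) p2(1) unfolding PP_def ndist_def by auto
    ultimately show ?thesis using p1 p2 by simp
  next
    case True
    have par: "even (aT a1 b1 a2 b2) \<longleftrightarrow> even (a1 + a2)" using aT_par assms by blast
    have ab: "aA a1 b1 a2 b2 = aT a1 b1 a2 b2" "bA a1 b1 a2 b2 = b1 - a2" "MA a1 b1 a2 b2 = 0"
      using True unfolding aA_def bA_def MA_def by auto
    have pa: "even p1 \<longleftrightarrow> even a1" "even p2 \<longleftrightarrow> even a2" using p1 p2 unfolding PP_def by auto
    show ?thesis
    proof (cases "p2 \<le> p1")
      case True
      have "PP (aT a1 b1 a2 b2) (b1 - a2) (p1 - p2)"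
      proof -
        have "pbit (a1 + a2) \<le> p1 - p2"
        proof (cases "even (a1 + a2)")
          case True then show ?thesis by (simp add: pbit_def)
        next
          case False then have "odd (p1 - p2)" using pa \<open>p2 \<le> p1\<close> by auto
          then show ?thesis using False pbit_le_odd by blast
        qed
        moreover have "a1 - b2 \<le> p1 - p2" "a2 - b1 = 0" "p1 - p2 \<le> b1 - a2"
          using p1 p2 \<open>a2 \<le> b1\<close> unfolding PP_def by auto
        ultimately have "aT a1 b1 a2 b2 \<le> p1 - p2" using aT_cases[of a1 b1 a2 b2] by auto
        moreover have "even (p1 - p2 - aT a1 b1 a2 b2)" using calculation par pa \<open>p2 \<le> p1\<close> by auto
        ultimately show ?thesis unfolding PP_def using \<open>p1 - p2 \<le> b1 - a2\<close> by auto
      qed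
      then have "D (aT a1 b1 a2 b2) (b1 - a2) k \<le> ndist k (p1 - p2)" by (rule Dlow')
      also have "\<dots> \<le> ndist (k + j) p1 + ndist j p2" using True unfolding ndist_def by auto
      finally show ?thesis using ab p1 p2 by simp
    next
      case False
      have "a1 - b2 = 0" using False p1 p2 unfolding PP_def by auto
      moreover have "a2 - b1 = 0" using True by simp
      ultimately have "aT a1 b1 a2 b2 \<le> pbit (a1 + a2)" using aT_cases[of a1 b1 a2 b2]
        by (elim disjE) simp_all
      moreover have "pbit (a1 + a2) \<le> aT a1 b1 a2 b2" by (rule aT_ge)
      ultimately have aTb: "aT a1 b1 a2 b2 = pbit (a1 + a2)" by (rule antisym)
      have "pbit (a1 + a2) \<le> b1 - a2"
      proof (cases "even (a1 + a2)")
        case True then show ?thesis by (simp add: pbit_def)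
      next
        case False then have "odd (b1 - a2)" using assms \<open>a2 \<le> b1\<close> by auto
        then show ?thesis using False pbit_le_odd by blast
      qed
      then have "PP (aT a1 b1 a2 b2) (b1 - a2) (pbit (a1 + a2))" unfolding PP_def aTb by auto
      then have "D (aT a1 b1 a2 b2) (b1 - a2) k \<le> ndist k (pbit (a1 + a2))" by (rule Dlow')
      also have "\<dots> \<le> ndist (k + j) p1 + ndist j p2"
        using False pbit_simps(1)[of "a1 + a2"] unfolding ndist_def by auto
      finally show ?thesis using ab p1 p2 by simp
    qed
  qed
qed

lemma at_dec:
  assumes "PP (aT a1 b1 a2 b2) (b1 - a2) p" "a2 \<le> b1" "a1 \<le> b1" "even (b1 - a1)" "a2 \<le> b2" "even (b2 - a2)"
  shows "\<exists>p1 p2. PP a1 b1 p1 \<and> PP a2 b2 p2 \<and> p1 = p + p2"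
proof -
  have par: "even (aT a1 b1 a2 b2) \<longleftrightarrow> even (a1 + a2)" using aT_par assms(3-) by blast
  have g: "a1 - b2 \<le> aT a1 b1 a2 b2" by (rule aT_ge)
  have pp: "even p \<longleftrightarrow> even (a1 + a2)" "aT a1 b1 a2 b2 \<le> p" "p \<le> b1 - a2"
    using assms(1) par unfolding PP_def by auto
  have eb: "even b1 \<longleftrightarrow> even a1" "even b2 \<longleftrightarrow> even a2" using assms by auto
  show ?thesis
  proof (cases "a1 \<le> p + a2")
    case True
    have "PP a1 b1 (p + a2)" unfolding PP_def using True pp eb assms(2) by auto
    moreover have "PP a2 b2 a2" using assms unfolding PP_def by auto
    ultimately show ?thesis by blast
  next
    case False
    have "PP a2 b2 (a1 - p)" unfolding PP_def using False pp g eb by auto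
    moreover have "PP a1 b1 a1" using assms unfolding PP_def by auto
    ultimately show ?thesis using False by (intro exI[of _ a1] exI[of _ "a1 - p"]) auto
  qed
qed

lemma at_up:
  assumes "a1 \<le> b1" "even (b1 - a1)" "a2 \<le> b2" "even (b2 - a2)" "b1 \<le> n1" "b2 \<le> n2" "k \<le> n1"
  shows "\<exists>j. j \<le> n2 \<and> k + j \<le> n1 \<and>
            D a1 b1 (k + j) + D a2 b2 j = MA a1 b1 a2 b2 + D (aA a1 b1 a2 b2) (bA a1 b1 a2 b2) k"
proof -
  have "\<exists>j. j \<le> n2 \<and> k + j \<le> n1 \<and>
            D a1 b1 (k + j) + D a2 b2 j \<le> MA a1 b1 a2 b2 + D (aA a1 b1 a2 b2) (bA a1 b1 a2 b2) k"
  proof (cases "a2 \<le> b1")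
    case False
    define j where "j = b1 - k"
    have q: "PP a1 b1 b1" "PP a2 b2 a2" using assms unfolding PP_def by auto
    have "D a1 b1 (k + j) + D a2 b2 j \<le> ndist (k + j) b1 + ndist j a2"
      using add_mono[OF Dlow'[OF q(1)] Dlow'[OF q(2)]] .
    also have "\<dots> = a2 - b1 + k"
    proof (cases "k \<le> b1")
      case True then show ?thesis using False unfolding j_def ndist_def by simp
    next
      case c: False then have "j = 0" unfolding j_def by simp
      then show ?thesis using False c unfolding ndist_def by simp
    qed
    also have "\<dots> = MA a1 b1 a2 b2 + D (aA a1 b1 a2 b2) (bA a1 b1 a2 b2) k"
      using False by (simp add: MA_def aA_def bA_def D00)
    finally have "D a1 b1 (k + j) + D a2 b2 j \<le> MA a1 b1 a2 b2 + D (aA a1 b1 a2 b2) (bA a1 b1 a2 b2) k" .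
    moreover have "j \<le> n2" "k + j \<le> n1" using False assms unfolding j_def by linarith+
    ultimately show ?thesis by blast
  next
    case True
    have ab: "aA a1 b1 a2 b2 = aT a1 b1 a2 b2" "bA a1 b1 a2 b2 = b1 - a2" "MA a1 b1 a2 b2 = 0"
      using True unfolding aA_def bA_def MA_def by auto
    have "aA a1 b1 a2 b2 \<le> bA a1 b1 a2 b2" "even (bA a1 b1 a2 b2 - aA a1 b1 a2 b2)"
      using aA_props[OF assms(1-4)] by blast+
    then have "aT a1 b1 a2 b2 \<le> b1 - a2" "even (b1 - a2 - aT a1 b1 a2 b2)" unfolding ab by blast+
    then obtain p where p: "PP (aT a1 b1 a2 b2) (b1 - a2) p" "D (aT a1 b1 a2 b2) (b1 - a2) k = ndist k p"
      using Dup' by blast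
    obtain p1 p2 where d: "PP a1 b1 p1" "PP a2 b2 p2" "p1 = p + p2" using at_dec[OF p(1) True] assms by blast
    define j where "j = min p2 (n1 - k)"
    have bb: "p1 \<le> n1" "p2 \<le> n2" using d assms unfolding PP_def by auto
    have c: "j \<le> n2" "k + j \<le> n1" "ndist (k + j) p1 + ndist j p2 = ndist k p"
    proof -
      show "j \<le> n2" "k + j \<le> n1" using bb assms unfolding j_def by linarith+
      show "ndist (k + j) p1 + ndist j p2 = ndist k p"
      proof (cases "k + p2 \<le> n1")
        case True then have "j = p2" unfolding j_def by simp
        then show ?thesis using d(3) unfolding ndist_def by linarith
      next
        case False then have "j = n1 - k" unfolding j_def by simp
        then show ?thesis using d(3) False bb assms(7) unfolding ndist_def by linarith
      qed
    qed
    have "D a1 b1 (k + j) + D a2 b2 j \<le> ndist k p"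
      using c(3) Dlow'[OF d(1), of "k + j"] Dlow'[OF d(2), of j] by linarith
    then have "D a1 b1 (k + j) + D a2 b2 j \<le> MA a1 b1 a2 b2 + D (aA a1 b1 a2 b2) (bA a1 b1 a2 b2) k"
      unfolding ab p(2) by simp
    then show ?thesis using c(1,2) by blast
  qed
  then obtain j where j: "j \<le> n2" "k + j \<le> n1"
    "D a1 b1 (k + j) + D a2 b2 j \<le> MA a1 b1 a2 b2 + D (aA a1 b1 a2 b2) (bA a1 b1 a2 b2) k" by blast
  moreover have "MA a1 b1 a2 b2 + D (aA a1 b1 a2 b2) (bA a1 b1 a2 b2) k \<le> D a1 b1 (k + j) + D a2 b2 j"
    using at_low assms by blast
  ultimately show ?thesis by (intro exI[of _ j]) auto
qed

lemma D_step:
  assumes "a \<le> b" "even (b - a)"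
  shows "D a b (Suc k) \<le> Suc (D a b k)" "0 < a \<Longrightarrow> Suc (D a b 1) = D a b 0"
  using assms unfolding D_def by auto

lemma at_up0:
  assumes "a1 \<le> b1" "even (b1 - a1)" "a2 \<le> b2" "even (b2 - a2)" "b1 \<le> n1" "b2 \<le> n2" "1 \<le> n1" "1 \<le> n2"
  shows "(\<exists>j. 1 \<le> j \<and> j \<le> n2 \<and> j \<le> n1 \<and>
            D a1 b1 j + D a2 b2 j = MA a1 b1 a2 b2 + D (aA a1 b1 a2 b2) (bA a1 b1 a2 b2) 0)
         \<or> (a1 = 0 \<and> a2 = 0)"
proof -
  obtain j where j: "j \<le> n2" "j \<le> n1"
    "D a1 b1 j + D a2 b2 j = MA a1 b1 a2 b2 + D (aA a1 b1 a2 b2) (bA a1 b1 a2 b2) 0"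
    using at_up[OF assms(1-6), of 0] by auto
  show ?thesis
  proof (cases "1 \<le> j \<or> (a1 = 0 \<and> a2 = 0)")
    case True then show ?thesis using j by blast
  next
    case False
    then have j0: "j = 0" and a: "0 < a1 \<or> 0 < a2" by auto
    have "D a1 b1 1 + D a2 b2 1 \<le> D a1 b1 0 + D a2 b2 0"
      using a D_step(1)[OF assms(1,2), of 0] D_step(1)[OF assms(3,4), of 0]
        D_step(2)[OF assms(1,2)] D_step(2)[OF assms(3,4)] by auto
    moreover have "MA a1 b1 a2 b2 + D (aA a1 b1 a2 b2) (bA a1 b1 a2 b2) 0 \<le> D a1 b1 (0 + 1) + D a2 b2 1"
      using at_low assms by blast
    ultimately show ?thesis using j j0 assms by (intro disjI1 exI[of _ 1]) auto
  qed
qed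




definition cross :: "'a set \<Rightarrow> 'a set \<Rightarrow> 'a set set" where
  "cross A B = {{u, w} | u w. u \<in> A \<and> w \<in> B}"

lemma tedges_cross:
  "tedges (Node TrueTwin l r) = tedges l \<union> tedges r \<union> cross (tts l) (tts r)"
  "tedges (Node Attach l r) = tedges l \<union> tedges r \<union> cross (tts l) (tts r)"
  by (simp_all add: cross_def)

lemma cross_sym: "cross A B = cross B A"
  unfolding cross_def by (auto simp: insert_commute)

lemma cross_mem: "{x, y} \<in> cross A B \<Longrightarrow> (x \<in> A \<and> y \<in> B) \<or> (x \<in> B \<and> y \<in> A)"
  unfolding cross_def by (auto simp: doubleton_eq_iff)

lemma cross_in: "x \<in> A \<Longrightarrow> y \<in> B \<Longrightarrow> {x, y} \<in> cross A B"
  unfolding cross_def by auto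

lemma leaves_finite[simp]: "finite (leaves v)"
  by (induction v) auto

lemma tts_sub: "tts v \<subseteq> leaves v"
  by (induction v rule: tts.induct) auto

lemma tts_ne: "tts v \<noteq> {}"
  by (induction v rule: tts.induct) auto

lemma tts_finite[simp]: "finite (tts v)"
  by (rule finite_subset[OF tts_sub]) simp

lemma tedges_sub: "e \<in> tedges v \<Longrightarrow> e \<subseteq> leaves v"
proof (induction v arbitrary: e rule: tedges.induct)
  case (2 l r) then show ?case using tts_sub by fastforce
next
  case (4 l r) then show ?case using tts_sub by fastforce
qed auto

lemma subtree_props: "v \<in> subtrees T \<Longrightarrow> distinct_leaves T \<Longrightarrow> distinct_leaves v \<and> tedges v \<subseteq> tedges T"
proof (induction T)
  case (Leaf x) then show ?case by simp
next
  case (Node c l r)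
  show ?case
  proof (cases "v = Node c l r")
    case True then show ?thesis using Node by simp
  next
    case False
    then have "v \<in> subtrees l \<or> v \<in> subtrees r" using Node by auto
    moreover have "tedges l \<subseteq> tedges (Node c l r)" "tedges r \<subseteq> tedges (Node c l r)"
      by (cases c; auto)+
    ultimately show ?thesis using Node by auto
  qed
qed

section \<open>Perfect matchings\<close>

lemma pm_mono: "has_perfect_matching E W \<Longrightarrow> E \<subseteq> E' \<Longrightarrow> has_perfect_matching E' W"
  unfolding has_perfect_matching_def by (elim exE conjE) (rule exI, (rule conjI)?, erule subset_trans, assumption, blast)

lemma pm_empty: "has_perfect_matching E {}"
  unfolding has_perfect_matching_def by (intro exI[of _ "{}"]) auto

lemma pm_union:
  assumes "has_perfect_matching E1 W1" "has_perfect_matching E2 W2" "W1 \<inter> W2 = {}"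
  shows "has_perfect_matching (E1 \<union> E2) (W1 \<union> W2)"
proof -
  obtain M1 where M1: "M1 \<subseteq> E1" "\<forall>e\<in>M1. e \<subseteq> W1" "\<forall>e\<in>M1. \<forall>e'\<in>M1. e \<noteq> e' \<longrightarrow> e \<inter> e' = {}" "\<Union>M1 = W1"
    using assms(1) unfolding has_perfect_matching_def by blast
  obtain M2 where M2: "M2 \<subseteq> E2" "\<forall>e\<in>M2. e \<subseteq> W2" "\<forall>e\<in>M2. \<forall>e'\<in>M2. e \<noteq> e' \<longrightarrow> e \<inter> e' = {}" "\<Union>M2 = W2"
    using assms(2) unfolding has_perfect_matching_def by blast
  have "\<forall>e\<in>M1 \<union> M2. \<forall>e'\<in>M1 \<union> M2. e \<noteq> e' \<longrightarrow> e \<inter> e' = {}"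
  proof (intro ballI impI)
    fix e e' assume e: "e \<in> M1 \<union> M2" "e' \<in> M1 \<union> M2" "e \<noteq> e'"
    from e(1,2) consider "e \<in> M1" "e' \<in> M1" | "e \<in> M1" "e' \<in> M2" | "e \<in> M2" "e' \<in> M1" | "e \<in> M2" "e' \<in> M2"
      by blast
    then show "e \<inter> e' = {}"
    proof cases
      case 1 then show ?thesis using M1(3) e(3) by simp
    next
      case 2 then have "e \<subseteq> W1" "e' \<subseteq> W2" using M1(2) M2(2) by auto
      then show ?thesis using assms(3) by auto
    next
      case 3 then have "e \<subseteq> W2" "e' \<subseteq> W1" using M1(2) M2(2) by auto
      then show ?thesis using assms(3) by auto
    next
      case 4 then show ?thesis using M2(3) e(3) by simp
    qed
  qed
  then show ?thesis unfolding has_perfect_matching_def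
    using M1 M2 by (intro exI[of _ "M1 \<union> M2"]) auto
qed

lemma pm_add:
  assumes "has_perfect_matching E W" "{u, w} \<in> E" "u \<notin> W" "w \<notin> W"
  shows "has_perfect_matching E (W \<union> {u, w})"
proof -
  obtain M where M: "M \<subseteq> E" "\<forall>e\<in>M. e \<subseteq> W" "\<forall>e\<in>M. \<forall>e'\<in>M. e \<noteq> e' \<longrightarrow> e \<inter> e' = {}" "\<Union>M = W"
    using assms(1) unfolding has_perfect_matching_def by blast
  have "\<forall>e\<in>insert {u, w} M. \<forall>e'\<in>insert {u, w} M. e \<noteq> e' \<longrightarrow> e \<inter> e' = {}"
    using M(2,3) assms(3,4) by blast
  then show ?thesis unfolding has_perfect_matching_def
    using M assms(2) by (intro exI[of _ "insert {u, w} M"]) auto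
qed

lemma pm_remove:
  assumes "M \<subseteq> E" "\<forall>e\<in>M. e \<subseteq> W" "\<forall>e\<in>M. \<forall>e'\<in>M. e \<noteq> e' \<longrightarrow> e \<inter> e' = {}" "\<Union>M = W" "e \<in> M"
  shows "has_perfect_matching E (W - e)"
proof -
  have "\<Union>(M - {e}) = W - e"
  proof
    show "\<Union>(M - {e}) \<subseteq> W - e" using assms by blast
    show "W - e \<subseteq> \<Union>(M - {e})" using assms(4) by blast
  qed
  then show ?thesis unfolding has_perfect_matching_def
    using assms by (intro exI[of _ "M - {e}"]) auto
qed

lemma pm_even:
  assumes "has_perfect_matching E W" "finite W" "\<forall>e\<in>E. card e = 2"
  shows "even (card W)"
proof -
  obtain M where M: "M \<subseteq> E" "\<forall>e\<in>M. e \<subseteq> W" "\<forall>e\<in>M. \<forall>e'\<in>M. e \<noteq> e' \<longrightarrow> e \<inter> e' = {}" "\<Union>M = W"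
    using assms(1) unfolding has_perfect_matching_def by blast
  have fin: "finite M" using M(2) assms(2) by (meson Pow_iff finite_Pow_iff finite_subset subsetI)
  have "card W = sum card M"
    unfolding M(4)[symmetric]
    by (rule card_Union_disjoint) (use M(2,3) assms(2) in \<open>auto simp: pairwise_def disjnt_def intro: finite_subset\<close>)
  also have "\<dots> = sum (\<lambda>_. 2) M" using M(1) assms(3) by (intro sum.cong) auto
  also have "\<dots> = 2 * card M" by simp
  finally show ?thesis by simp
qed

lemma pm_split:
  assumes "has_perfect_matching (El \<union> Er) W" "\<forall>e\<in>El. e \<subseteq> Ll" "\<forall>e\<in>Er. e \<subseteq> Lr" "Ll \<inter> Lr = {}"
  shows "has_perfect_matching El (W \<inter> Ll)"
proof -
  obtain M where M: "M \<subseteq> El \<union> Er" "\<forall>e\<in>M. e \<subseteq> W" "\<forall>e\<in>M. \<forall>e'\<in>M. e \<noteq> e' \<longrightarrow> e \<inter> e' = {}" "\<Union>M = W"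
    using assms(1) unfolding has_perfect_matching_def by blast
  have "\<Union>{e \<in> M. e \<in> El} = W \<inter> Ll"
  proof
    show "\<Union>{e \<in> M. e \<in> El} \<subseteq> W \<inter> Ll" using M(2) assms(2) by blast
    show "W \<inter> Ll \<subseteq> \<Union>{e \<in> M. e \<in> El}"
    proof
      fix x assume x: "x \<in> W \<inter> Ll"
      then obtain e where e: "e \<in> M" "x \<in> e" using M(4) by blast
      have "e \<notin> Er" using e x assms(3,4) by blast
      then show "x \<in> \<Union>{e \<in> M. e \<in> El}" using e M(1) by blast
    qed
  qed
  then show ?thesis unfolding has_perfect_matching_def
    using M assms(2) by (intro exI[of _ "{e \<in> M. e \<in> El}"]) auto
qed

lemma card_split:
  assumes "finite A" "A \<subseteq> Ll \<union> Lr" "Ll \<inter> Lr = {}"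
  shows "card A = card (A \<inter> Ll) + card (A \<inter> Lr)"
proof -
  have "A = (A \<inter> Ll) \<union> (A \<inter> Lr)" using assms by blast
  then have "card A = card ((A \<inter> Ll) \<union> (A \<inter> Lr))" by simp
  also have "\<dots> = card (A \<inter> Ll) + card (A \<inter> Lr)"
    by (rule card_Un_disjoint) (use assms in auto)
  finally show ?thesis .
qed

section \<open>Unpairing and pairing cross edges\<close>

lemma unpair:
  assumes "has_perfect_matching (El \<union> Er \<union> cross Tl Tr) W" "finite W" "Tl \<inter> Tr = {}"
  shows "\<exists>Y. Y \<subseteq> W \<and> Y \<subseteq> Tl \<union> Tr \<and> card (Y \<inter> Tl) = card (Y \<inter> Tr) \<and>
             has_perfect_matching (El \<union> Er) (W - Y)"
  using assms
proof (induction "card W" arbitrary: W rule: less_induct)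
  case less
  obtain M where M: "M \<subseteq> El \<union> Er \<union> cross Tl Tr" "\<forall>e\<in>M. e \<subseteq> W"
    "\<forall>e\<in>M. \<forall>e'\<in>M. e \<noteq> e' \<longrightarrow> e \<inter> e' = {}" "\<Union>M = W"
    using less.prems(1) unfolding has_perfect_matching_def by blast
  show ?case
  proof (cases "M \<subseteq> El \<union> Er")
    case True
    then have "has_perfect_matching (El \<union> Er) W" unfolding has_perfect_matching_def
      using M by (intro exI[of _ M]) auto
    then show ?thesis by (intro exI[of _ "{}"]) auto
  next
    case False
    then obtain e where e: "e \<in> M" "e \<in> cross Tl Tr" using M(1) by blast
    then obtain u w where uw: "e = {u, w}" "u \<in> Tl" "w \<in> Tr" unfolding cross_def by blast
    have uwW: "u \<in> W" "w \<in> W" using e(1) M(2) uw(1) by auto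
    have pm': "has_perfect_matching (El \<union> Er \<union> cross Tl Tr) (W - e)"
      using pm_remove[OF M e(1)] .
    have "card (W - e) < card W" using uwW uw(1) less.prems(2) by (intro psubset_card_mono) auto
    then obtain Y where Y: "Y \<subseteq> W - e" "Y \<subseteq> Tl \<union> Tr" "card (Y \<inter> Tl) = card (Y \<inter> Tr)"
      "has_perfect_matching (El \<union> Er) (W - e - Y)"
      using less.hyps[of "W - e"] pm' less.prems(2,3) by auto
    have uw2: "u \<notin> Tr" "w \<notin> Tl" "u \<notin> Y" "w \<notin> Y" using uw less.prems(3) Y(1) by auto
    have fY: "finite Y" using Y(1) less.prems(2) finite_subset by blast
    have c1: "insert u (insert w Y) \<inter> Tl = insert u (Y \<inter> Tl)" using uw uw2 by auto
    have c2: "insert u (insert w Y) \<inter> Tr = insert w (Y \<inter> Tr)" using uw uw2 by auto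
    have "card (insert u (insert w Y) \<inter> Tl) = card (insert u (insert w Y) \<inter> Tr)"
      unfolding c1 c2 using fY uw2 Y(3) by simp
    moreover have "W - insert u (insert w Y) = W - e - Y" using uw(1) by auto
    ultimately show ?thesis using Y uwW uw
      by (intro exI[of _ "insert u (insert w Y)"]) auto
  qed
qed

lemma pair_up:
  assumes "has_perfect_matching E W" "finite Y" "Y \<inter> W = {}" "Y \<subseteq> Tl \<union> Tr"
    "card (Y \<inter> Tl) = card (Y \<inter> Tr)" "cross Tl Tr \<subseteq> E" "Tl \<inter> Tr = {}"
  shows "has_perfect_matching E (W \<union> Y)"
  using assms
proof (induction "card (Y \<inter> Tl)" arbitrary: Y W)
  case 0
  then have "Y \<inter> Tl = {}" "Y \<inter> Tr = {}" by (auto simp: card_eq_0_iff)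
  then have "Y = {}" using 0 by blast
  then show ?case using 0 by simp
next
  case (Suc n)
  have "Y \<inter> Tl \<noteq> {}" using Suc.hyps(2) by auto
  then obtain u where u: "u \<in> Y" "u \<in> Tl" by blast
  have "Y \<inter> Tr \<noteq> {}" using Suc.hyps(2) Suc.prems(5) by auto
  then obtain w where w: "w \<in> Y" "w \<in> Tr" by blast
  have uw: "u \<noteq> w" "u \<notin> Tr" "w \<notin> Tl" using u w Suc.prems(7) by auto
  define Y' where "Y' = Y - {u, w}"
  have c1: "Y' \<inter> Tl = (Y \<inter> Tl) - {u}" using uw unfolding Y'_def by auto
  have c2: "Y' \<inter> Tr = (Y \<inter> Tr) - {w}" using uw unfolding Y'_def by auto
  have fin: "finite (Y \<inter> Tl)" "finite (Y \<inter> Tr)" using Suc.prems(2) by auto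
  have "n = card (Y' \<inter> Tl)" unfolding c1 using Suc.hyps(2) u fin by simp
  moreover have "card (Y' \<inter> Tl) = card (Y' \<inter> Tr)"
    unfolding c1 c2 using Suc.prems(5) u w fin by simp
  ultimately have IH: "has_perfect_matching E (W \<union> Y')"
    using Suc.hyps(1)[of Y' W] Suc.prems unfolding Y'_def by auto
  have "has_perfect_matching E ((W \<union> Y') \<union> {u, w})"
    by (rule pm_add[OF IH]) (use u w Suc.prems(3,6) cross_in[of u Tl w Tr] in \<open>auto simp: Y'_def\<close>)
  moreover have "(W \<union> Y') \<union> {u, w} = W \<union> Y" using u w unfolding Y'_def by auto
  ultimately show ?case by simp
qed

section \<open>Feasibility with explicit witness\<close>

definition fw :: "'a dtree \<Rightarrow> 'a set \<Rightarrow> 'a set \<Rightarrow> bool" where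
  "fw v S X \<longleftrightarrow> S \<subseteq> leaves v \<and> leaves v - tts v \<subseteq> closed_nbhd (tedges v) S \<and>
     X \<subseteq> S \<inter> tts v \<and> has_perfect_matching (tedges v) (S - X)"

lemma kf_iff: "k_feasible v k S \<longleftrightarrow> (\<exists>X. fw v S X \<and> card X = k)"
  unfolding k_feasible_def fw_def by blast

lemma kf_le: "k_feasible v k S \<Longrightarrow> k \<le> card (tts v)"
  unfolding k_feasible_def by (auto intro: card_mono)

lemma closed_nbhd_mono: "E \<subseteq> E' \<Longrightarrow> S \<subseteq> S' \<Longrightarrow> closed_nbhd E S \<subseteq> closed_nbhd E' S'"
  unfolding closed_nbhd_def by blast

lemma dom_left:
  assumes "\<forall>e\<in>El. e \<subseteq> Ll" "\<forall>e\<in>Er. e \<subseteq> Lr" "Ll \<inter> Lr = {}" "Tl \<subseteq> Ll" "Tr \<subseteq> Lr"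
    "x \<in> Ll" "x \<notin> Tl" "x \<in> closed_nbhd (El \<union> Er \<union> cross Tl Tr) S"
  shows "x \<in> closed_nbhd El (S \<inter> Ll)"
proof (cases "x \<in> S")
  case True then show ?thesis using assms(6) unfolding closed_nbhd_def by blast
next
  case False
  then obtain w where w: "w \<in> S" "{x, w} \<in> El \<union> Er \<union> cross Tl Tr"
    using assms(8) unfolding closed_nbhd_def by blast
  show ?thesis
  proof (cases "{x, w} \<in> El")
    case True
    then have "w \<in> Ll" using assms(1) by blast
    then show ?thesis using True w(1) unfolding closed_nbhd_def by blast
  next
    case F: False
    show ?thesis
    proof (cases "{x, w} \<in> Er")
      case True then have "x \<in> Lr" using assms(2) by blast
      then show ?thesis using assms(3,6) by blast
    next
      case False
      then have "{x, w} \<in> cross Tl Tr" using w(2) F by blast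
      then have "x \<in> Tl \<or> x \<in> Tr" using cross_mem[of x w Tl Tr] by auto
      then show ?thesis using assms(3,5,6,7) by blast
    qed
  qed
qed

lemma sub_leaves: "\<forall>e\<in>tedges v. e \<subseteq> leaves v"
  using tedges_sub by blast

lemma core_split:
  assumes dl: "leaves l \<inter> leaves r = {}"
    and S: "S \<subseteq> leaves l \<union> leaves r" and X: "X \<subseteq> S" "X \<inter> leaves l \<subseteq> tts l" "X \<inter> leaves r \<subseteq> tts r"
    and pm: "has_perfect_matching (tedges l \<union> tedges r) (S - X)"
    and dom: "(leaves l - tts l) \<union> (leaves r - tts r) \<subseteq>
                closed_nbhd (tedges l \<union> tedges r \<union> cross (tts l) (tts r)) S"
  shows "k_feasible l (card (X \<inter> leaves l)) (S \<inter> leaves l)"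
    "k_feasible r (card (X \<inter> leaves r)) (S \<inter> leaves r)"
    "card S = card (S \<inter> leaves l) + card (S \<inter> leaves r)"
proof -
  have fS: "finite S" by (rule finite_subset[OF S]) simp
  show "card S = card (S \<inter> leaves l) + card (S \<inter> leaves r)" using card_split[OF fS S dl] .
  have sl: "\<forall>e\<in>tedges l. e \<subseteq> leaves l" "\<forall>e\<in>tedges r. e \<subseteq> leaves r" by (rule sub_leaves)+
  have tl: "tts l \<subseteq> leaves l" "tts r \<subseteq> leaves r" by (rule tts_sub)+
  have dl': "leaves r \<inter> leaves l = {}" using dl by blast
  have pml: "has_perfect_matching (tedges l) (S \<inter> leaves l - X \<inter> leaves l)"
  proof -
    have "has_perfect_matching (tedges l) ((S - X) \<inter> leaves l)" using pm_split[OF pm sl dl] .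
    moreover have "(S - X) \<inter> leaves l = S \<inter> leaves l - X \<inter> leaves l" by blast
    ultimately show ?thesis by simp
  qed
  have pmr: "has_perfect_matching (tedges r) (S \<inter> leaves r - X \<inter> leaves r)"
  proof -
    have pm2: "has_perfect_matching (tedges r \<union> tedges l) (S - X)" using pm by (simp add: Un_commute)
    have "has_perfect_matching (tedges r) ((S - X) \<inter> leaves r)" using pm_split[OF pm2 sl(2,1) dl'] .
    moreover have "(S - X) \<inter> leaves r = S \<inter> leaves r - X \<inter> leaves r" by blast
    ultimately show ?thesis by simp
  qed
  have doml: "leaves l - tts l \<subseteq> closed_nbhd (tedges l) (S \<inter> leaves l)"
  proof
    fix x assume x: "x \<in> leaves l - tts l"
    then have "x \<in> closed_nbhd (tedges l \<union> tedges r \<union> cross (tts l) (tts r)) S" using dom by blast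
    then show "x \<in> closed_nbhd (tedges l) (S \<inter> leaves l)"
      using dom_left[OF sl dl tl] x by blast
  qed
  have domr: "leaves r - tts r \<subseteq> closed_nbhd (tedges r) (S \<inter> leaves r)"
  proof
    fix x assume x: "x \<in> leaves r - tts r"
    have eq: "tedges l \<union> tedges r \<union> cross (tts l) (tts r) = tedges r \<union> tedges l \<union> cross (tts r) (tts l)"
      using cross_sym by blast
    have "x \<in> closed_nbhd (tedges l \<union> tedges r \<union> cross (tts l) (tts r)) S" using dom x by blast
    then have "x \<in> closed_nbhd (tedges r \<union> tedges l \<union> cross (tts r) (tts l)) S" by (simp only: eq)
    then show "x \<in> closed_nbhd (tedges r) (S \<inter> leaves r)"
      using dom_left[OF sl(2,1) dl' tl(2,1)] x by blast
  qed
  show "k_feasible l (card (X \<inter> leaves l)) (S \<inter> leaves l)"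
    unfolding kf_iff fw_def using doml pml X by (intro exI[of _ "X \<inter> leaves l"]) auto
  show "k_feasible r (card (X \<inter> leaves r)) (S \<inter> leaves r)"
    unfolding kf_iff fw_def using domr pmr X by (intro exI[of _ "X \<inter> leaves r"]) auto
qed

lemma dl_node: "distinct_leaves (Node c l r) \<Longrightarrow> leaves l \<inter> leaves r = {}"
  by simp

lemma tts_disj: "leaves l \<inter> leaves r = {} \<Longrightarrow> tts l \<inter> tts r = {}"
  using tts_sub[of l] tts_sub[of r] by blast

lemma ft_lower:
  assumes "distinct_leaves (Node FalseTwin l r)" "k_feasible (Node FalseTwin l r) k S"
  shows "\<exists>k1 k2 S1 S2. k = k1 + k2 \<and> k_feasible l k1 S1 \<and> k_feasible r k2 S2 \<and> card S = card S1 + card S2"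
proof -
  obtain X where X: "fw (Node FalseTwin l r) S X" "card X = k" using assms(2) kf_iff by blast
  have dl: "leaves l \<inter> leaves r = {}" using assms(1) by simp
  have tl: "tts l \<subseteq> leaves l" "tts r \<subseteq> leaves r" by (rule tts_sub)+
  have S: "S \<subseteq> leaves l \<union> leaves r" "X \<subseteq> S" "X \<subseteq> tts l \<union> tts r"
    and pm: "has_perfect_matching (tedges l \<union> tedges r) (S - X)"
    and dom: "(leaves l \<union> leaves r) - (tts l \<union> tts r) \<subseteq> closed_nbhd (tedges l \<union> tedges r) S"
    using X(1) unfolding fw_def by auto
  have X2: "X \<inter> leaves l \<subseteq> tts l" "X \<inter> leaves r \<subseteq> tts r" using S(3) tl dl by blast+
  have "(leaves l - tts l) \<union> (leaves r - tts r) \<subseteq> (leaves l \<union> leaves r) - (tts l \<union> tts r)"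
    using tl dl by blast
  also have "\<dots> \<subseteq> closed_nbhd (tedges l \<union> tedges r \<union> cross (tts l) (tts r)) S"
    using dom closed_nbhd_mono[of "tedges l \<union> tedges r" "tedges l \<union> tedges r \<union> cross (tts l) (tts r)" S S]
    by blast
  finally have dom': "(leaves l - tts l) \<union> (leaves r - tts r) \<subseteq>
      closed_nbhd (tedges l \<union> tedges r \<union> cross (tts l) (tts r)) S" .
  note cs = core_split[OF dl S(1,2) X2 pm dom']
  have fX: "finite X" by (rule finite_subset[OF S(3)]) simp
  have "card X = card (X \<inter> leaves l) + card (X \<inter> leaves r)"
    using card_split[OF fX _ dl] S(1,2) by blast
  then show ?thesis using cs X(2) by blast
qed

lemma tt_lower:
  assumes "distinct_leaves (Node TrueTwin l r)" "k_feasible (Node TrueTwin l r) k S"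
  shows "\<exists>x1 x2 j S1 S2. k = x1 + x2 \<and> k_feasible l (x1 + j) S1 \<and> k_feasible r (x2 + j) S2 \<and>
     card S = card S1 + card S2"
proof -
  obtain X where X: "fw (Node TrueTwin l r) S X" "card X = k" using assms(2) kf_iff by blast
  have dl: "leaves l \<inter> leaves r = {}" using assms(1) by simp
  have tl: "tts l \<subseteq> leaves l" "tts r \<subseteq> leaves r" by (rule tts_sub)+
  have td: "tts l \<inter> tts r = {}" using tts_disj[OF dl] .
  have S: "S \<subseteq> leaves l \<union> leaves r" "X \<subseteq> S" "X \<subseteq> tts l \<union> tts r"
    and pm: "has_perfect_matching (tedges l \<union> tedges r \<union> cross (tts l) (tts r)) (S - X)"
    and dom: "(leaves l \<union> leaves r) - (tts l \<union> tts r) \<subseteq>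
         closed_nbhd (tedges l \<union> tedges r \<union> cross (tts l) (tts r)) S"
    using X(1) unfolding fw_def tedges_cross by auto
  have fS: "finite S" by (rule finite_subset[OF S(1)]) simp
  obtain Y where Y: "Y \<subseteq> S - X" "Y \<subseteq> tts l \<union> tts r" "card (Y \<inter> tts l) = card (Y \<inter> tts r)"
    "has_perfect_matching (tedges l \<union> tedges r) (S - X - Y)"
    using unpair[OF pm _ td] fS by blast
  define X' where "X' = X \<union> Y"
  have S': "X' \<subseteq> S" using S(2) Y(1) unfolding X'_def by blast
  have X2: "X' \<inter> leaves l \<subseteq> tts l" "X' \<inter> leaves r \<subseteq> tts r"
    using S(3) Y(2) tl dl unfolding X'_def by blast+
  have pm': "has_perfect_matching (tedges l \<union> tedges r) (S - X')"
    using Y(4) unfolding X'_def by (simp add: Diff_Un Int_commute set_diff_eq)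
  have dom': "(leaves l - tts l) \<union> (leaves r - tts r) \<subseteq>
      closed_nbhd (tedges l \<union> tedges r \<union> cross (tts l) (tts r)) S"
    using dom tl dl by blast
  note cs = core_split[OF dl S(1) S' X2 pm' dom']
  have fX: "finite X" "finite Y" using fS S(2) Y(1) finite_subset by blast+
  have XY: "X \<inter> Y = {}" using Y(1) by blast
  have c1: "card (X' \<inter> leaves l) = card (X \<inter> leaves l) + card (Y \<inter> tts l)"
  proof -
    have "X' \<inter> leaves l = (X \<inter> leaves l) \<union> (Y \<inter> tts l)" using Y(2) tl dl unfolding X'_def by blast
    moreover have "card ((X \<inter> leaves l) \<union> (Y \<inter> tts l)) = card (X \<inter> leaves l) + card (Y \<inter> tts l)"
      by (rule card_Un_disjoint) (use fX XY in auto)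
    ultimately show ?thesis by simp
  qed
  have c2: "card (X' \<inter> leaves r) = card (X \<inter> leaves r) + card (Y \<inter> tts l)"
  proof -
    have "X' \<inter> leaves r = (X \<inter> leaves r) \<union> (Y \<inter> tts r)" using Y(2) tl dl unfolding X'_def by blast
    moreover have "card ((X \<inter> leaves r) \<union> (Y \<inter> tts r)) = card (X \<inter> leaves r) + card (Y \<inter> tts r)"
      by (rule card_Un_disjoint) (use fX XY in auto)
    ultimately show ?thesis using Y(3) by simp
  qed
  have "card X = card (X \<inter> leaves l) + card (X \<inter> leaves r)"
    using card_split[OF fX(1) _ dl] S(1,2) by blast
  then show ?thesis using cs c1 c2 X(2)
    by (intro exI[of _ "card (X \<inter> leaves l)"] exI[of _ "card (X \<inter> leaves r)"]
        exI[of _ "card (Y \<inter> tts l)"] exI[of _ "S \<inter> leaves l"] exI[of _ "S \<inter> leaves r"]) auto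
qed

lemma at_lower:
  assumes "distinct_leaves (Node Attach l r)" "k_feasible (Node Attach l r) k S"
  shows "\<exists>j S1 S2. k_feasible l (k + j) S1 \<and> k_feasible r j S2 \<and> card S = card S1 + card S2"
proof -
  obtain X where X: "fw (Node Attach l r) S X" "card X = k" using assms(2) kf_iff by blast
  have dl: "leaves l \<inter> leaves r = {}" using assms(1) by simp
  have tl: "tts l \<subseteq> leaves l" "tts r \<subseteq> leaves r" by (rule tts_sub)+
  have td: "tts l \<inter> tts r = {}" using tts_disj[OF dl] .
  have S: "S \<subseteq> leaves l \<union> leaves r" "X \<subseteq> S" "X \<subseteq> tts l"
    and pm: "has_perfect_matching (tedges l \<union> tedges r \<union> cross (tts l) (tts r)) (S - X)"
    and dom: "(leaves l \<union> leaves r) - tts l \<subseteq>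
         closed_nbhd (tedges l \<union> tedges r \<union> cross (tts l) (tts r)) S"
    using X(1) unfolding fw_def tedges_cross by auto
  have fS: "finite S" by (rule finite_subset[OF S(1)]) simp
  obtain Y where Y: "Y \<subseteq> S - X" "Y \<subseteq> tts l \<union> tts r" "card (Y \<inter> tts l) = card (Y \<inter> tts r)"
    "has_perfect_matching (tedges l \<union> tedges r) (S - X - Y)"
    using unpair[OF pm _ td] fS by blast
  define X' where "X' = X \<union> Y"
  have S': "X' \<subseteq> S" using S(2) Y(1) unfolding X'_def by blast
  have X2: "X' \<inter> leaves l \<subseteq> tts l" "X' \<inter> leaves r \<subseteq> tts r"
    using S(3) Y(2) tl dl unfolding X'_def by blast+
  have pm': "has_perfect_matching (tedges l \<union> tedges r) (S - X')"
    using Y(4) unfolding X'_def by (simp add: Diff_Un Int_commute set_diff_eq)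
  have dom': "(leaves l - tts l) \<union> (leaves r - tts r) \<subseteq>
      closed_nbhd (tedges l \<union> tedges r \<union> cross (tts l) (tts r)) S"
    using dom tl dl by blast
  note cs = core_split[OF dl S(1) S' X2 pm' dom']
  have fX: "finite X" "finite Y" using fS S(2) Y(1) finite_subset by blast+
  have XY: "X \<inter> Y = {}" using Y(1) by blast
  have c1: "card (X' \<inter> leaves l) = card X + card (Y \<inter> tts l)"
  proof -
    have "X' \<inter> leaves l = X \<union> (Y \<inter> tts l)" using S(3) Y(2) tl dl unfolding X'_def by blast
    moreover have "card (X \<union> (Y \<inter> tts l)) = card X + card (Y \<inter> tts l)"
      by (rule card_Un_disjoint) (use fX XY in auto)
    ultimately show ?thesis by simp
  qed
  have c2: "card (X' \<inter> leaves r) = card (Y \<inter> tts l)"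
  proof -
    have "X' \<inter> leaves r = Y \<inter> tts r" using S(3) Y(2) tl dl unfolding X'_def by blast
    then show ?thesis using Y(3) by simp
  qed
  show ?thesis using cs c1 c2 X(2)
    by (intro exI[of _ "card (Y \<inter> tts l)"] exI[of _ "S \<inter> leaves l"] exI[of _ "S \<inter> leaves r"]) auto
qed

lemma fw_parts:
  assumes "fw v S X"
  shows "S \<subseteq> leaves v" "X \<subseteq> S" "X \<subseteq> tts v" "leaves v - tts v \<subseteq> closed_nbhd (tedges v) S"
    "has_perfect_matching (tedges v) (S - X)" "finite S" "finite X"
proof -
  show S: "S \<subseteq> leaves v" "X \<subseteq> S" "X \<subseteq> tts v" "leaves v - tts v \<subseteq> closed_nbhd (tedges v) S"
    "has_perfect_matching (tedges v) (S - X)" using assms unfolding fw_def by auto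
  show "finite S" by (rule finite_subset[OF S(1)]) simp
  then show "finite X" using S(2) finite_subset by blast
qed

lemma dom_union:
  assumes "leaves l \<inter> leaves r = {}"
    "leaves l - tts l \<subseteq> closed_nbhd (tedges l) S1" "leaves r - tts r \<subseteq> closed_nbhd (tedges r) S2"
    "tedges l \<union> tedges r \<subseteq> E"
  shows "(leaves l \<union> leaves r) - (tts l \<union> tts r) \<subseteq> closed_nbhd E (S1 \<union> S2)"
proof -
  have "(leaves l \<union> leaves r) - (tts l \<union> tts r) \<subseteq> (leaves l - tts l) \<union> (leaves r - tts r)" by blast
  also have "\<dots> \<subseteq> closed_nbhd E (S1 \<union> S2)"
    using assms(2,3) closed_nbhd_mono[of "tedges l" E S1 "S1 \<union> S2"]
      closed_nbhd_mono[of "tedges r" E S2 "S1 \<union> S2"] assms(4) by blast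
  finally show ?thesis .
qed

lemma ft_upper:
  assumes "distinct_leaves (Node FalseTwin l r)" "k_feasible l k1 S1" "k_feasible r k2 S2"
  shows "k_feasible (Node FalseTwin l r) (k1 + k2) (S1 \<union> S2) \<and> card (S1 \<union> S2) = card S1 + card S2"
proof -
  have dl: "leaves l \<inter> leaves r = {}" using assms(1) by simp
  obtain X1 where X1: "fw l S1 X1" "card X1 = k1" using assms(2) kf_iff by blast
  obtain X2 where X2: "fw r S2 X2" "card X2 = k2" using assms(3) kf_iff by blast
  note p1 = fw_parts[OF X1(1)] and p2 = fw_parts[OF X2(1)]
  have tl: "tts l \<subseteq> leaves l" "tts r \<subseteq> leaves r" by (rule tts_sub)+
  have "has_perfect_matching (tedges l \<union> tedges r) ((S1 - X1) \<union> (S2 - X2))"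
    by (rule pm_union[OF p1(5) p2(5)]) (use p1(1) p2(1) dl in auto)
  moreover have "(S1 - X1) \<union> (S2 - X2) = (S1 \<union> S2) - (X1 \<union> X2)" using p1(1,2) p2(1,2) dl by blast
  ultimately have pm: "has_perfect_matching (tedges l \<union> tedges r) ((S1 \<union> S2) - (X1 \<union> X2))" by simp
  have dom: "(leaves l \<union> leaves r) - (tts l \<union> tts r) \<subseteq> closed_nbhd (tedges l \<union> tedges r) (S1 \<union> S2)"
    by (rule dom_union[OF dl p1(4) p2(4)]) simp
  have cX: "card (X1 \<union> X2) = k1 + k2"
    using card_Un_disjoint[OF p1(7) p2(7)] p1(1,2) p2(1,2) dl X1(2) X2(2) by blast
  have cS: "card (S1 \<union> S2) = card S1 + card S2"
    using card_Un_disjoint[OF p1(6) p2(6)] p1(1) p2(1) dl by blast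
  have "fw (Node FalseTwin l r) (S1 \<union> S2) (X1 \<union> X2)"
    unfolding fw_def using pm dom p1 p2 by auto
  then show ?thesis using cX cS kf_iff by blast
qed

lemma combine:
  assumes dl: "leaves l \<inter> leaves r = {}" and X1: "fw l S1 X1" and X2: "fw r S2 X2"
    and j: "j \<le> card X1" "j \<le> card X2"
  shows "\<exists>X. X \<subseteq> X1 \<union> X2 \<and> card (X \<inter> leaves l) = card X1 - j \<and> card (X \<inter> leaves r) = card X2 - j \<and>
     has_perfect_matching (tedges l \<union> tedges r \<union> cross (tts l) (tts r)) ((S1 \<union> S2) - X)"
proof -
  note p1 = fw_parts[OF X1] and p2 = fw_parts[OF X2]
  have tl: "tts l \<subseteq> leaves l" "tts r \<subseteq> leaves r" by (rule tts_sub)+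
  have td: "tts l \<inter> tts r = {}" using tts_disj[OF dl] .
  obtain Y1 where Y1: "Y1 \<subseteq> X1" "card Y1 = j" "finite Y1" using obtain_subset_with_card_n[OF j(1)] by blast
  obtain Y2 where Y2: "Y2 \<subseteq> X2" "card Y2 = j" "finite Y2" using obtain_subset_with_card_n[OF j(2)] by blast
  define W where "W = (S1 - X1) \<union> (S2 - X2)"
  have "has_perfect_matching (tedges l \<union> tedges r) W"
    unfolding W_def by (rule pm_union[OF p1(5) p2(5)]) (use p1(1) p2(1) dl in auto)
  then have pmW: "has_perfect_matching (tedges l \<union> tedges r \<union> cross (tts l) (tts r)) W"
    by (rule pm_mono) blast
  have Yl: "(Y1 \<union> Y2) \<inter> tts l = Y1" using Y1(1) Y2(1) p1(3) p2(3) td by blast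
  have Yr: "(Y1 \<union> Y2) \<inter> tts r = Y2" using Y1(1) Y2(1) p1(3) p2(3) td by blast
  have "has_perfect_matching (tedges l \<union> tedges r \<union> cross (tts l) (tts r)) (W \<union> (Y1 \<union> Y2))"
  proof (rule pair_up[OF pmW, of _ "tts l" "tts r"])
    show "finite (Y1 \<union> Y2)" using Y1(3) Y2(3) by simp
    show "(Y1 \<union> Y2) \<inter> W = {}" unfolding W_def using Y1(1) Y2(1) p1(1,2) p2(1,2) dl by blast
    show "Y1 \<union> Y2 \<subseteq> tts l \<union> tts r" using Y1(1) Y2(1) p1(3) p2(3) by blast
    show "card ((Y1 \<union> Y2) \<inter> tts l) = card ((Y1 \<union> Y2) \<inter> tts r)" unfolding Yl Yr using Y1(2) Y2(2) by simp
    show "cross (tts l) (tts r) \<subseteq> tedges l \<union> tedges r \<union> cross (tts l) (tts r)" by blast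
    show "tts l \<inter> tts r = {}" by (rule td)
  qed
  moreover have "W \<union> (Y1 \<union> Y2) = (S1 \<union> S2) - ((X1 - Y1) \<union> (X2 - Y2))"
    unfolding W_def using Y1(1) Y2(1) p1(1,2) p2(1,2) dl by blast
  moreover have "(X1 - Y1 \<union> (X2 - Y2)) \<inter> leaves l = X1 - Y1" using p1(1,2) p2(1,2) dl by blast
  moreover have "(X1 - Y1 \<union> (X2 - Y2)) \<inter> leaves r = X2 - Y2" using p1(1,2) p2(1,2) dl by blast
  moreover have "card (X1 - Y1) = card X1 - j" using card_Diff_subset[OF Y1(3,1)] Y1(2) by simp
  moreover have "card (X2 - Y2) = card X2 - j" using card_Diff_subset[OF Y2(3,1)] Y2(2) by simp
  ultimately show ?thesis by (intro exI[of _ "(X1 - Y1) \<union> (X2 - Y2)"]) auto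
qed

lemma tt_upper:
  assumes "distinct_leaves (Node TrueTwin l r)" "k_feasible l (x1 + j) S1" "k_feasible r (x2 + j) S2"
  shows "k_feasible (Node TrueTwin l r) (x1 + x2) (S1 \<union> S2) \<and> card (S1 \<union> S2) = card S1 + card S2"
proof -
  have dl: "leaves l \<inter> leaves r = {}" using assms(1) by simp
  obtain X1 where X1: "fw l S1 X1" "card X1 = x1 + j" using assms(2) kf_iff by blast
  obtain X2 where X2: "fw r S2 X2" "card X2 = x2 + j" using assms(3) kf_iff by blast
  note p1 = fw_parts[OF X1(1)] and p2 = fw_parts[OF X2(1)]
  obtain X where X: "X \<subseteq> X1 \<union> X2" "card (X \<inter> leaves l) = x1" "card (X \<inter> leaves r) = x2"
     "has_perfect_matching (tedges l \<union> tedges r \<union> cross (tts l) (tts r)) ((S1 \<union> S2) - X)"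
    using combine[OF dl X1(1) X2(1), of j] X1(2) X2(2) by auto
  have dom: "(leaves l \<union> leaves r) - (tts l \<union> tts r) \<subseteq>
      closed_nbhd (tedges l \<union> tedges r \<union> cross (tts l) (tts r)) (S1 \<union> S2)"
    by (rule dom_union[OF dl p1(4) p2(4)]) blast
  have fX: "finite X" using X(1) p1(7) p2(7) finite_subset by blast
  have cX: "card X = x1 + x2"
    using card_split[OF fX _ dl] X(1,2,3) p1(1,2) p2(1,2) by blast
  have cS: "card (S1 \<union> S2) = card S1 + card S2"
    using card_Un_disjoint[OF p1(6) p2(6)] p1(1) p2(1) dl by blast
  have "fw (Node TrueTwin l r) (S1 \<union> S2) X"
    unfolding fw_def tedges_cross using X dom p1 p2 by auto
  then show ?thesis using cX cS kf_iff by blast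
qed

lemma at_upper:
  assumes "distinct_leaves (Node Attach l r)" "k_feasible l (k + j) S1" "k_feasible r j S2" "1 \<le> k + j"
  shows "k_feasible (Node Attach l r) k (S1 \<union> S2) \<and> card (S1 \<union> S2) = card S1 + card S2"
proof -
  have dl: "leaves l \<inter> leaves r = {}" using assms(1) by simp
  obtain X1 where X1: "fw l S1 X1" "card X1 = k + j" using assms(2) kf_iff by blast
  obtain X2 where X2: "fw r S2 X2" "card X2 = j" using assms(3) kf_iff by blast
  note p1 = fw_parts[OF X1(1)] and p2 = fw_parts[OF X2(1)]
  have tl: "tts l \<subseteq> leaves l" "tts r \<subseteq> leaves r" by (rule tts_sub)+
  obtain X where X: "X \<subseteq> X1 \<union> X2" "card (X \<inter> leaves l) = k" "card (X \<inter> leaves r) = 0"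
     "has_perfect_matching (tedges l \<union> tedges r \<union> cross (tts l) (tts r)) ((S1 \<union> S2) - X)"
    using combine[OF dl X1(1) X2(1), of j] X1(2) X2(2) by auto
  have fX: "finite X" using X(1) p1(7) p2(7) finite_subset by blast
  have "X \<inter> leaves r = {}" using X(3) fX by simp
  then have Xl: "X \<subseteq> X1" using X(1) p2(1,2) by blast
  have "X \<subseteq> leaves l \<union> leaves r" using X(1) p1(1,2) p2(1,2) by blast
  then have cX: "card X = k" using card_split[OF fX _ dl] X(2,3) by simp
  have "X1 \<noteq> {}" using X1(2) assms(4) by auto
  then obtain t where t: "t \<in> X1" by blast
  have tS: "t \<in> S1" "t \<in> tts l" using t p1(2,3) by blast+
  have dom: "(leaves l \<union> leaves r) - tts l \<subseteq>
      closed_nbhd (tedges l \<union> tedges r \<union> cross (tts l) (tts r)) (S1 \<union> S2)"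
  proof
    fix x assume x: "x \<in> (leaves l \<union> leaves r) - tts l"
    show "x \<in> closed_nbhd (tedges l \<union> tedges r \<union> cross (tts l) (tts r)) (S1 \<union> S2)"
    proof (cases "x \<in> tts r")
      case True
      have "{x, t} \<in> cross (tts l) (tts r)"
        using cross_in[of t "tts l" x "tts r"] tS True by (simp add: insert_commute)
      then show ?thesis using tS unfolding closed_nbhd_def by blast
    next
      case False
      then have "x \<in> (leaves l \<union> leaves r) - (tts l \<union> tts r)" using x by blast
      then show ?thesis using dom_union[OF dl p1(4) p2(4), of "tedges l \<union> tedges r \<union> cross (tts l) (tts r)"]
        by blast
    qed
  qed
  have cS: "card (S1 \<union> S2) = card S1 + card S2"
    using card_Un_disjoint[OF p1(6) p2(6)] p1(1) p2(1) dl by blast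
  have "fw (Node Attach l r) (S1 \<union> S2) X"
    unfolding fw_def tedges_cross using X Xl dom p1 p2 by auto
  then show ?thesis using cX cS kf_iff by blast
qed

section \<open>Gamma values\<close>

lemma gamma_le: "k_feasible v k S \<Longrightarrow> gamma_hat v k \<le> enat (card S)"
  unfolding gamma_hat_def by (rule INF_lower) simp

lemma gamma_ge: "(\<And>S. k_feasible v k S \<Longrightarrow> c \<le> card S) \<Longrightarrow> enat c \<le> gamma_hat v k"
  unfolding gamma_hat_def by (rule INF_greatest) simp

lemma gamma_attain:
  assumes "gamma_hat v k = enat c"
  shows "\<exists>S. k_feasible v k S \<and> card S = c"
proof -
  let ?A = "(\<lambda>S. enat (card S)) ` {S. k_feasible v k S}"
  have g: "gamma_hat v k = Inf ?A" unfolding gamma_hat_def by simp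
  have ne: "?A \<noteq> {}"
  proof
    assume "?A = {}"
    then have "gamma_hat v k = \<infinity>" unfolding g by (simp add: Inf_enat_def)
    then show False using assms by simp
  qed
  then have "Inf ?A \<in> ?A" unfolding Inf_enat_def by (auto intro: LeastI)
  then show ?thesis using assms g by auto
qed

definition wfv :: "'a dtree \<Rightarrow> bool" where
  "wfv v \<longleftrightarrow> distinct_leaves v \<and> (\<forall>e\<in>tedges v. card e = 2)"

lemma kf_parity:
  assumes "wfv v" "k_feasible v k S"
  shows "even (card S + k)"
proof -
  obtain X where X: "fw v S X" "card X = k" using assms(2) kf_iff by blast
  note p = fw_parts[OF X(1)]
  have "even (card (S - X))"
    by (rule pm_even[OF p(5)]) (use p(6) assms(1) in \<open>auto simp: wfv_def\<close>)
  moreover have "card (S - X) = card S - card X" by (rule card_Diff_subset[OF p(7,2)])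
  moreover have "card X \<le> card S" by (rule card_mono[OF p(6,2)])
  ultimately show ?thesis using X(2) by auto
qed

definition shape :: "'a dtree \<Rightarrow> nat \<Rightarrow> nat \<Rightarrow> nat \<Rightarrow> bool" where
  "shape v M a b \<longleftrightarrow> a \<le> b \<and> b \<le> card (tts v) \<and> even (b - a) \<and>
     (\<forall>k \<le> card (tts v). gamma_hat v k = enat (M + D a b k))"

lemma Daa: "a \<le> b \<Longrightarrow> D a b a = 0" by (simp add: D_def)
lemma Dbb: "a \<le> b \<Longrightarrow> D a b b = 0" by (simp add: D_def)

lemma shape_parity:
  assumes "wfv v" "shape v M a b"
  shows "even (M + a)"
proof -
  have "gamma_hat v a = enat M" using assms(2) Daa unfolding shape_def by auto
  then obtain S where "k_feasible v a S" "card S = M" using gamma_attain by blast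
  then show ?thesis using kf_parity[OF assms(1)] by blast
qed

lemma leaf_shape: "shape (Leaf x) 0 0 0"
proof -
  have f0: "k_feasible (Leaf x) 0 {}"
    unfolding k_feasible_def using pm_empty by auto
  have f1: "k_feasible (Leaf x) 1 {x}"
    unfolding k_feasible_def using pm_empty by (intro conjI exI[of _ "{x}"]) auto
  have g0: "gamma_hat (Leaf x) 0 = enat 0"
    using gamma_le[OF f0] by (simp add: zero_enat_def[symmetric])
  have "enat 1 \<le> gamma_hat (Leaf x) 1"
  proof (rule gamma_ge)
    fix S assume "k_feasible (Leaf x) 1 S"
    then obtain X where X: "X \<subseteq> S" "card X = 1" "S \<subseteq> {x}" unfolding k_feasible_def by auto
    have "finite S" using X(3) finite_subset by blast
    then show "1 \<le> card S" using card_mono[OF _ X(1)] X(2) by simp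
  qed
  then have g1: "gamma_hat (Leaf x) 1 = enat 1" using gamma_le[OF f1] by simp
  show ?thesis unfolding shape_def
  proof (intro conjI allI impI)
    fix k assume "k \<le> card (tts (Leaf x))"
    then have "k = 0 \<or> k = 1" by simp arith
    then show "gamma_hat (Leaf x) k = enat (0 + D 0 0 k)" using g0 g1 by (auto simp: D_def)
  qed simp_all
qed

lemma card_tts_node:
  assumes "distinct_leaves (Node c l r)" "c \<noteq> Attach"
  shows "card (tts (Node c l r)) = card (tts l) + card (tts r)"
proof -
  have "tts (Node c l r) = tts l \<union> tts r" using assms(2) by (cases c) auto
  moreover have "tts l \<inter> tts r = {}" using tts_disj[of l r] assms(1) by simp
  ultimately show ?thesis by (simp add: card_Un_disjoint)
qed

lemma shape_val:
  assumes "shape v M a b" "k \<le> card (tts v)"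
  shows "gamma_hat v k = enat (M + D a b k)"
  using assms unfolding shape_def by blast

lemma shape_lower:
  assumes "shape v M a b" "k_feasible v k S"
  shows "M + D a b k \<le> card S"
proof -
  have "k \<le> card (tts v)" using kf_le assms(2) .
  then have "enat (M + D a b k) \<le> enat (card S)" using gamma_le[OF assms(2)] shape_val[OF assms(1)] by simp
  then show ?thesis by simp
qed

lemma shape_attain:
  assumes "shape v M a b" "k \<le> card (tts v)"
  shows "\<exists>S. k_feasible v k S \<and> card S = M + D a b k"
  using gamma_attain shape_val[OF assms] by blast

lemma ft_shape:
  assumes dl: "distinct_leaves (Node FalseTwin l r)" and sl: "shape l M1 a1 b1" and sr: "shape r M2 a2 b2"
  shows "shape (Node FalseTwin l r) (M1 + M2) (a1 + a2) (b1 + b2)"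
proof -
  let ?v = "Node FalseTwin l r"
  have n: "card (tts ?v) = card (tts l) + card (tts r)" using card_tts_node[OF dl] by simp
  have ab: "a1 \<le> b1" "even (b1 - a1)" "b1 \<le> card (tts l)" "a2 \<le> b2" "even (b2 - a2)" "b2 \<le> card (tts r)"
    using sl sr unfolding shape_def by auto
  have val: "gamma_hat ?v k = enat (M1 + M2 + D (a1 + a2) (b1 + b2) k)" if k: "k \<le> card (tts ?v)" for k
  proof (rule antisym)
    obtain k1 k2 where kk: "k1 \<le> card (tts l)" "k2 \<le> card (tts r)" "k = k1 + k2"
      "D a1 b1 k1 + D a2 b2 k2 = D (a1+a2) (b1+b2) k"
      using ft_up[OF ab(1,2,4,5,3,6), of k] k n by auto
    obtain S1 where S1: "k_feasible l k1 S1" "card S1 = M1 + D a1 b1 k1" using shape_attain[OF sl kk(1)] by blast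
    obtain S2 where S2: "k_feasible r k2 S2" "card S2 = M2 + D a2 b2 k2" using shape_attain[OF sr kk(2)] by blast
    have "k_feasible ?v k (S1 \<union> S2) \<and> card (S1 \<union> S2) = card S1 + card S2"
      using ft_upper[OF dl S1(1) S2(1)] kk(3) by simp
    then have "k_feasible ?v k (S1 \<union> S2)" "card (S1 \<union> S2) = M1 + M2 + D (a1 + a2) (b1 + b2) k"
      using S1(2) S2(2) kk(4) by auto
    then show "gamma_hat ?v k \<le> enat (M1 + M2 + D (a1 + a2) (b1 + b2) k)"
      using gamma_le[of ?v k "S1 \<union> S2"] by simp
  next
    show "enat (M1 + M2 + D (a1 + a2) (b1 + b2) k) \<le> gamma_hat ?v k"
    proof (rule gamma_ge)
      fix S assume "k_feasible ?v k S"
      then obtain k1 k2 S1 S2 where kk: "k = k1 + k2" "k_feasible l k1 S1" "k_feasible r k2 S2"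
        "card S = card S1 + card S2" using ft_lower[OF dl] by blast
      have "M1 + D a1 b1 k1 \<le> card S1" "M2 + D a2 b2 k2 \<le> card S2"
        using shape_lower[OF sl kk(2)] shape_lower[OF sr kk(3)] .
      moreover have "D (a1 + a2) (b1 + b2) (k1 + k2) \<le> D a1 b1 k1 + D a2 b2 k2" using ft_low ab by blast
      ultimately show "M1 + M2 + D (a1 + a2) (b1 + b2) k \<le> card S" unfolding kk(1) using kk(4) by linarith
    qed
  qed
  show ?thesis unfolding shape_def using val n ab by auto
qed

lemma tt_shape:
  assumes dl: "distinct_leaves (Node TrueTwin l r)" and sl: "shape l M1 a1 b1" and sr: "shape r M2 a2 b2"
  shows "shape (Node TrueTwin l r) (M1 + M2) (aT a1 b1 a2 b2) (b1 + b2)"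
proof -
  let ?v = "Node TrueTwin l r"
  have n: "card (tts ?v) = card (tts l) + card (tts r)" using card_tts_node[OF dl] by simp
  have ab: "a1 \<le> b1" "even (b1 - a1)" "b1 \<le> card (tts l)" "a2 \<le> b2" "even (b2 - a2)" "b2 \<le> card (tts r)"
    using sl sr unfolding shape_def by auto
  have val: "gamma_hat ?v k = enat (M1 + M2 + D (aT a1 b1 a2 b2) (b1 + b2) k)" if k: "k \<le> card (tts ?v)" for k
  proof (rule antisym)
    obtain x1 x2 j where kk: "x1 + j \<le> card (tts l)" "x2 + j \<le> card (tts r)" "k = x1 + x2"
      "D a1 b1 (x1 + j) + D a2 b2 (x2 + j) = D (aT a1 b1 a2 b2) (b1 + b2) k"
      using tt_up[OF ab(1,2,4,5,3,6), of k] k n by auto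
    obtain S1 where S1: "k_feasible l (x1 + j) S1" "card S1 = M1 + D a1 b1 (x1 + j)"
      using shape_attain[OF sl kk(1)] by blast
    obtain S2 where S2: "k_feasible r (x2 + j) S2" "card S2 = M2 + D a2 b2 (x2 + j)"
      using shape_attain[OF sr kk(2)] by blast
    have "k_feasible ?v k (S1 \<union> S2) \<and> card (S1 \<union> S2) = card S1 + card S2"
      using tt_upper[OF dl S1(1) S2(1)] kk(3) by simp
    then have "k_feasible ?v k (S1 \<union> S2)" "card (S1 \<union> S2) = M1 + M2 + D (aT a1 b1 a2 b2) (b1 + b2) k"
      using S1(2) S2(2) kk(4) by auto
    then show "gamma_hat ?v k \<le> enat (M1 + M2 + D (aT a1 b1 a2 b2) (b1 + b2) k)"
      using gamma_le[of ?v k "S1 \<union> S2"] by simp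
  next
    show "enat (M1 + M2 + D (aT a1 b1 a2 b2) (b1 + b2) k) \<le> gamma_hat ?v k"
    proof (rule gamma_ge)
      fix S assume "k_feasible ?v k S"
      then obtain x1 x2 j S1 S2 where kk: "k = x1 + x2" "k_feasible l (x1 + j) S1" "k_feasible r (x2 + j) S2"
        "card S = card S1 + card S2" using tt_lower[OF dl] by blast
      have "M1 + D a1 b1 (x1 + j) \<le> card S1" "M2 + D a2 b2 (x2 + j) \<le> card S2"
        using shape_lower[OF sl kk(2)] shape_lower[OF sr kk(3)] .
      moreover have "D (aT a1 b1 a2 b2) (b1 + b2) (x1 + x2) \<le> D a1 b1 (x1 + j) + D a2 b2 (x2 + j)"
        using tt_low ab by blast
      ultimately show "M1 + M2 + D (aT a1 b1 a2 b2) (b1 + b2) k \<le> card S" unfolding kk(1) using kk(4) by linarith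
    qed
  qed
  have "aT a1 b1 a2 b2 \<le> b1 + b2" "even (b1 + b2 - aT a1 b1 a2 b2)" using aT_le ab by blast+
  then show ?thesis unfolding shape_def using val n ab by auto
qed

lemma D01: assumes "even b" shows "D 0 b 1 = 1"
proof -
  have "b = 0 \<or> 2 \<le> b" using assms by presburger
  then show ?thesis by (auto simp: D_def)
qed

lemma Dshift: assumes "2 \<le> b" "even b" "1 \<le> k" shows "D 0 b k = D 2 b k"
proof -
  consider "k = 1" | "k = 2" | "3 \<le> k" using assms(3) by linarith
  then show ?thesis using assms(1,2) by cases (auto simp: D_def)
qed

lemma D11: "1 \<le> k \<Longrightarrow> D 0 0 k = Suc (D 1 1 k)"
  by (auto simp: D_def)

lemma aT00: "aT 0 b1 0 b2 = 0"
  by (simp add: aT_def pbit_def)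

lemma at_shape:
  assumes wv: "wfv (Node Attach l r)" and wl: "wfv l" and wr: "wfv r"
    and sl: "shape l M1 a1 b1" and sr: "shape r M2 a2 b2"
  shows "\<exists>M a b. shape (Node Attach l r) M a b"
proof -
  let ?v = "Node Attach l r"
  have dl: "distinct_leaves ?v" using wv unfolding wfv_def by simp
  have n: "card (tts ?v) = card (tts l)" by simp
  have ab: "a1 \<le> b1" "even (b1 - a1)" "b1 \<le> card (tts l)" "a2 \<le> b2" "even (b2 - a2)" "b2 \<le> card (tts r)"
    using sl sr unfolding shape_def by auto
  have n1: "1 \<le> card (tts l)" "1 \<le> card (tts r)" using tts_ne tts_finite
    by (metis One_nat_def Suc_leI card_gt_0_iff)+
  define Mc where "Mc = M1 + M2 + MA a1 b1 a2 b2"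
  define ac where "ac = aA a1 b1 a2 b2"
  define bc where "bc = bA a1 b1 a2 b2"
  have acbc: "ac \<le> bc" "even (bc - ac)" "bc \<le> b1" using aA_props[OF ab(1,2,4,5)] unfolding ac_def bc_def
    by blast+
  have low: "enat (Mc + D ac bc k) \<le> gamma_hat ?v k" for k
  proof (rule gamma_ge)
    fix S assume "k_feasible ?v k S"
    then obtain j S1 S2 where kk: "k_feasible l (k + j) S1" "k_feasible r j S2"
      "card S = card S1 + card S2" using at_lower[OF dl] by blast
    have "M1 + D a1 b1 (k + j) \<le> card S1" "M2 + D a2 b2 j \<le> card S2"
      using shape_lower[OF sl kk(1)] shape_lower[OF sr kk(2)] .
    moreover have "MA a1 b1 a2 b2 + D ac bc k \<le> D a1 b1 (k + j) + D a2 b2 j"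
      using at_low[OF ab(1,2,4,5)] unfolding ac_def bc_def by blast
    ultimately show "Mc + D ac bc k \<le> card S" using kk(3) unfolding Mc_def by linarith
  qed
  have up: "gamma_hat ?v k \<le> enat (M1 + M2 + D a1 b1 (k + j) + D a2 b2 j)"
    if h: "k + j \<le> card (tts l)" "j \<le> card (tts r)" "1 \<le> k + j" for k j
  proof -
    obtain S1 where S1: "k_feasible l (k + j) S1" "card S1 = M1 + D a1 b1 (k + j)"
      using shape_attain[OF sl h(1)] by blast
    obtain S2 where S2: "k_feasible r j S2" "card S2 = M2 + D a2 b2 j"
      using shape_attain[OF sr h(2)] by blast
    have "k_feasible ?v k (S1 \<union> S2) \<and> card (S1 \<union> S2) = card S1 + card S2"
      using at_upper[OF dl S1(1) S2(1) h(3)] .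
    then have "k_feasible ?v k (S1 \<union> S2)" "card (S1 \<union> S2) = M1 + M2 + D a1 b1 (k + j) + D a2 b2 j"
      using S1(2) S2(2) by auto
    then show ?thesis using gamma_le[of ?v k "S1 \<union> S2"] by simp
  qed
  have val: "gamma_hat ?v k = enat (Mc + D ac bc k)" if k: "1 \<le> k" "k \<le> card (tts l)" for k
  proof (rule antisym)
    obtain j where j: "j \<le> card (tts r)" "k + j \<le> card (tts l)"
      "D a1 b1 (k + j) + D a2 b2 j = MA a1 b1 a2 b2 + D ac bc k"
      using at_up[OF ab(1,2,4,5,3,6) k(2)] unfolding ac_def bc_def by blast
    have eq: "M1 + M2 + D a1 b1 (k + j) + D a2 b2 j = Mc + D ac bc k" using j(3) unfolding Mc_def by linarith
    have "1 \<le> k + j" using k(1) by simp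
    then show "gamma_hat ?v k \<le> enat (Mc + D ac bc k)"
      using up[OF j(2,1)] eq by simp
  qed (rule low)
  have bcn: "bc \<le> card (tts ?v)" using acbc(3) ab(3) n by simp
  from at_up0[OF ab(1,2,4,5,3,6) n1]
  show ?thesis
  proof (elim disjE conjE exE)
    fix j assume j: "1 \<le> j" "j \<le> card (tts r)" "j \<le> card (tts l)"
      "D a1 b1 j + D a2 b2 j = MA a1 b1 a2 b2 + D (aA a1 b1 a2 b2) (bA a1 b1 a2 b2) 0"
    have "gamma_hat ?v 0 = enat (Mc + D ac bc 0)"
    proof (rule antisym)
      have eq: "M1 + M2 + D a1 b1 (0 + j) + D a2 b2 j = Mc + D ac bc 0"
        using j(4) unfolding Mc_def ac_def bc_def by simp
      have h: "0 + j \<le> card (tts l)" "j \<le> card (tts r)" "1 \<le> 0 + j" using j by auto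
      have "gamma_hat ?v 0 \<le> enat (M1 + M2 + D a1 b1 (0 + j) + D a2 b2 j)" by (rule up[OF h])
      then show "gamma_hat ?v 0 \<le> enat (Mc + D ac bc 0)" using eq by simp
    qed (rule low)
    then have "\<forall>k \<le> card (tts ?v). gamma_hat ?v k = enat (Mc + D ac bc k)"
      using val n by (metis One_nat_def Suc_leI not_gr_zero)
    then have "shape ?v Mc ac bc" unfolding shape_def using acbc bcn by blast
    then show ?thesis by blast
  next
    assume a0: "a1 = 0" "a2 = 0"
    have MA0: "MA a1 b1 a2 b2 = 0" "ac = 0" "bc = b1"
      using a0 unfolding MA_def ac_def bc_def aA_def bA_def by (auto simp: aT00)
    define M where "M = M1 + M2"
    have McM: "Mc = M" unfolding Mc_def M_def MA0 by simp
    have eb: "even b1" "even b2" using ab a0 by auto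
    have eM: "even M" using shape_parity[OF wl sl] shape_parity[OF wr sr] a0 unfolding M_def by simp
    have "gamma_hat ?v 0 \<le> enat (M1 + M2 + D a1 b1 (0 + 1) + D a2 b2 1)"
      using up[of 0 1] n1 by auto
    also have "\<dots> = enat (M + 2)" using D01[OF eb(1)] D01[OF eb(2)] a0 unfolding M_def by simp
    finally have hup: "gamma_hat ?v 0 \<le> enat (M + 2)" .
    have hlow: "enat M \<le> gamma_hat ?v 0" using low[of 0] McM MA0 by (simp add: D_def)
    obtain H where H: "gamma_hat ?v 0 = enat H" using hup by (cases "gamma_hat ?v 0") auto
    obtain S where S: "k_feasible ?v 0 S" "card S = H" using gamma_attain[OF H] by blast
    have eH: "even H" using kf_parity[OF wv S(1)] S(2) by simp
    have HM: "M \<le> H" "H \<le> M + 2" using H hup hlow by auto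
    have "H = M \<or> H = M + 2" using HM eH eM by presburger
    then show ?thesis
    proof
      assume "H = M"
      then have "\<forall>k \<le> card (tts ?v). gamma_hat ?v k = enat (M + D 0 b1 k)"
        using val H n MA0 McM by (metis D_def One_nat_def Suc_leI add.right_neutral diff_self_eq_0 le_zero_eq not_gr_zero)
      then have "shape ?v M 0 b1" unfolding shape_def using eb ab n by auto
      then show ?thesis by blast
    next
      assume HM2: "H = M + 2"
      show ?thesis
      proof (cases "b1 = 0")
        case True
        have "\<forall>k \<le> card (tts ?v). gamma_hat ?v k = enat (M + 1 + D 1 1 k)"
        proof (intro allI impI)
          fix k assume k: "k \<le> card (tts ?v)"
          show "gamma_hat ?v k = enat (M + 1 + D 1 1 k)"
          proof (cases "k = 0")
            case True then show ?thesis using H HM2 by (simp add: D_def)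
          next
            case False
            then have "gamma_hat ?v k = enat (M + D 0 0 k)" using val[of k] k n McM MA0 \<open>b1 = 0\<close> by simp
            then show ?thesis using D11[of k] False by simp
          qed
        qed
        then have "shape ?v (M + 1) 1 1" unfolding shape_def using n1 n by auto
        then show ?thesis by blast
      next
        case False
        then have b2': "2 \<le> b1" using eb(1) by presburger
        have "\<forall>k \<le> card (tts ?v). gamma_hat ?v k = enat (M + D 2 b1 k)"
        proof (intro allI impI)
          fix k assume k: "k \<le> card (tts ?v)"
          show "gamma_hat ?v k = enat (M + D 2 b1 k)"
          proof (cases "k = 0")
            case True then show ?thesis using H HM2 by (simp add: D_def)
          next
            case False
            then have "gamma_hat ?v k = enat (M + D 0 b1 k)" using val[of k] k n McM MA0 by simp
            then show ?thesis using Dshift[OF b2' eb(1), of k] False by simp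
          qed
        qed
        moreover have "even (b1 - 2)" using eb(1) b2' by simp
        ultimately have "shape ?v M 2 b1" unfolding shape_def using b2' ab n by auto
        then show ?thesis by blast
      qed
    qed
  qed
qed

lemma wfv_children:
  assumes "wfv (Node c l r)"
  shows "wfv l" "wfv r"
proof -
  have "tedges l \<subseteq> tedges (Node c l r)" "tedges r \<subseteq> tedges (Node c l r)" by (cases c; auto)+
  then show "wfv l" "wfv r" using assms unfolding wfv_def by auto
qed

lemma main_shape: "wfv v \<Longrightarrow> \<exists>M a b. shape v M a b"
proof (induction v)
  case (Leaf x) show ?case using leaf_shape[of x] by blast
next
  case (Node c l r)
  have w: "wfv l" "wfv r" using wfv_children[OF Node.prems] by auto
  obtain M1 a1 b1 where sl: "shape l M1 a1 b1" using Node.IH(1) w(1) by blast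
  obtain M2 a2 b2 where sr: "shape r M2 a2 b2" using Node.IH(2) w(2) by blast
  have dl: "distinct_leaves (Node c l r)" using Node.prems unfolding wfv_def by simp
  show ?case
  proof (cases c)
    case TrueTwin then show ?thesis using tt_shape[OF _ sl sr] dl by blast
  next
    case FalseTwin then show ?thesis using ft_shape[OF _ sl sr] dl by blast
  next
    case Attach then show ?thesis using at_shape[OF _ w sl sr] Node.prems by blast
  qed
qed

lemma shape_final:
  assumes sh: "shape v M a b" and k: "k \<le> card (tts v)"
  shows "gamma_hat v k =
    (if k \<le> alpha_hat v then min_hat v + enat (alpha_hat v - k)
     else if beta_hat v \<le> k then min_hat v + enat (k - beta_hat v)
     else if even (k - alpha_hat v) then min_hat v
     else min_hat v + 1)"
proof -
  let ?n = "card (tts v)"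
  have ab: "a \<le> b" "b \<le> ?n" using sh unfolding shape_def by auto
  have g: "\<And>k. k \<le> ?n \<Longrightarrow> gamma_hat v k = enat (M + D a b k)" using shape_val[OF sh] by blast
  have mh: "min_hat v = enat M" unfolding min_hat_def
  proof (rule Min_eqI)
    show "finite (gamma_hat v ` {0..?n})" by simp
    show "enat M \<le> y" if "y \<in> gamma_hat v ` {0..?n}" for y using that g by auto
    show "enat M \<in> gamma_hat v ` {0..?n}"
      using g[of a] ab Daa[OF ab(1)] by (intro image_eqI[of _ _ a]) auto
  qed
  have al: "alpha_hat v = a" unfolding alpha_hat_def
  proof (rule Least_equality)
    show "a \<le> ?n \<and> gamma_hat v a = min_hat v" using g[of a] ab Daa[OF ab(1)] mh by simp
    show "a \<le> y" if "y \<le> ?n \<and> gamma_hat v y = min_hat v" for y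
    proof (rule ccontr)
      assume "\<not> a \<le> y"
      then have "D a b y > 0" by (simp add: D_def)
      then show False using that g[of y] mh by simp
    qed
  qed
  have be: "beta_hat v = b" unfolding beta_hat_def
  proof (rule Greatest_equality)
    show "b \<le> ?n \<and> gamma_hat v b = min_hat v" using g[of b] ab Dbb[OF ab(1)] mh by simp
    show "y \<le> b" if "y \<le> ?n \<and> gamma_hat v y = min_hat v" for y
    proof (rule ccontr)
      assume "\<not> y \<le> b"
      then have "D a b y > 0" using ab(1) by (simp add: D_def)
      then show False using that g[of y] mh by simp
    qed
  qed
  show ?thesis unfolding mh al be g[OF k] by (simp add: D_def one_enat_def)
qed

theorem lemma3:
  fixes T :: "'a dtree" and V :: "'a set" and E :: "'a set set"
  assumes "distance_hereditary V E"
    and "decomposition_tree T V E"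
    and "v \<in> subtrees T" and "is_internal v"
    and "k \<le> card (tts v)"
  shows "gamma_hat v k =
    (if k \<le> alpha_hat v then min_hat v + enat (alpha_hat v - k)
     else if beta_hat v \<le> k then min_hat v + enat (k - beta_hat v)
     else if even (k - alpha_hat v) then min_hat v
     else min_hat v + 1)"
proof -
  have dT: "distinct_leaves T" "tedges T = E" using assms(2) unfolding decomposition_tree_def by auto
  have c2: "\<forall>e\<in>E. card e = 2" using assms(1) unfolding distance_hereditary_def simple_graph_def by auto
  have "distinct_leaves v" "tedges v \<subseteq> tedges T" using subtree_props[OF assms(3) dT(1)] by auto
  then have "wfv v" unfolding wfv_def using c2 dT(2) by auto
  then obtain M a b where "shape v M a b" using main_shape by blast
  then show ?thesis using shape_final assms(5) by blast
qed


end
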